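(* Consider the FlexGT/Acc-FlexGT recursion in the context, and suppose (S), (V), (G) hold. If $\gamma\le\frac{1}{4L\beta}$, then for all $K\ge1$, $$\frac1K\sum_{k=0}^{K-1}\mathbb{E}\|\nabla f(\bar x_{\beta k})\|^2\le\frac{4\big(\mathbb{E}[f(\bar x_0)]-f^*\big)}{\gamma\beta K}+\frac{4L^2}{n}\frac1K\sum_{k=0}^{K-1}\mathbb{E}\|\tilde{\mathbf x}_{\beta k}\|^2+\frac{2\gamma L}{n}\sigma^2 .$$
   Context: Problem: $n$ nodes, each with $f_i(x)=\mathbb{E}_{\xi_i\sim\mathcal D_i}[f_i(x;\xi_i)]$ on $\mathbb{R}^p$, $f=\frac1n\sum_i f_i$, $f^*=\inf f$ (finite). Stochastic oracle: unbiased $\nabla f_i(x;\xi_i)$, independent samples across nodes and iterations. Assumptions: (S) each $f_i$ has $L$-Lipschitz gradient. (V) $\mathbb{E}\|\nabla f_i(x;\xi_i)-\nabla f_i(x)\|^2\le\sigma^2$. (G) $W$ doubly stochastic, $\rho_W:=\|W-\mathbf J\|_2^2<1$, $\mathbf J=\mathbf 1\mathbf 1^\top/n$. Algorithm: integers $\alpha,\beta\ge1$, stepsize $\gamma>0$; $\bar W=W^\alpha$ (FlexGT) or $\bar W=M_\alpha$ (Acc-FlexGT) with $M_{-1}=M_0=I$, $M_{s+1}=(1+\eta)WM_s-\eta M_{s-1}$, $\eta=\frac{1-\sqrt{1-\rho_W}}{1+\sqrt{1-\rho_W}}$. Iterates $\mathbf x_t,\mathbf y_t\in\mathbb{R}^{n\times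 p}$; snapshot $\mathbf z_t=\mathbf x_{\beta\lfloor t/\beta\rfloor}$; $\nabla G_t$ has rows $\nabla f_i(z_{i,t};\xi_{i,t})$ with fresh samples. $\mathbf y_0=\nabla G_0$. For round $k\ge0$, $j=0,\dots,\beta-2$: $\mathbf x_{\beta k+j+1}=\mathbf x_{\beta k+j}-\gamma\mathbf y_{\beta k+j}$, $\mathbf y_{\beta k+j+1}=\mathbf y_{\beta k+j}+\nabla G_{\beta k+j+1}-\nabla G_{\beta k+j}$; round end: $\mathbf x_{\beta(k+1)}=\bar W(\mathbf x_{\beta k}-\gamma\sum_{j=0}^{\beta-1}\mathbf y_{\beta k+j})$, $\mathbf y_{\beta(k+1)}=\bar W(\mathbf y_{\beta k}+\nabla G_{\beta(k+1)}-\nabla G_{\beta k})$. Notation: $\|\cdot\|$ Euclidean/Frobenius; $\bar x_t=\mathbf 1^\top\mathbf x_t/n$, $\tilde{\mathbf x}_t=\mathbf x_t-\mathbf 1\bar x_t$. *)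

theory Defs
  imports "HOL-Probability.Probability"
begin

type_synonym ('p,'n) mat = "real^'p^'n"

definition Jmat :: "real^'n^'n" where
  "Jmat = (\<chi> i j. 1 / real CARD('n::finite))"

definition doubly_stochastic :: "real^'n^'n \<Rightarrow> bool" where
  "doubly_stochastic W \<longleftrightarrow>
     (\<forall>i j. W $ i $ j \<ge> 0) \<and>
     (\<forall>i. (\<Sum>j\<in>UNIV. W $ i $ j) = 1) \<and>
     (\<forall>j. (\<Sum>i\<in>UNIV. W $ i $ j) = 1)"

definition rhoW :: "real^'n^'n \<Rightarrow> real" where
  "rhoW W = (onorm (\<lambda>v::real^'n. (W - Jmat) *v v))\<^sup>2"

definition matpow :: "real^'n^'n \<Rightarrow> nat \<Rightarrow> real^'n^'n" where
  "matpow W a = ((\<lambda>M. W ** M) ^^ a) (mat 1)"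

definition etaW :: "real^'n^'n \<Rightarrow> real" where
  "etaW W = (1 - sqrt (1 - rhoW W)) / (1 + sqrt (1 - rhoW W))"

text \<open>Accelerated gossip matrices: accM W s = M_s, with M_{-1} = M_0 = I and
  M_{s+1} = (1+eta) W M_s - eta M_{s-1}.\<close>
fun accM :: "real^'n^'n \<Rightarrow> nat \<Rightarrow> real^'n^'n" where
  "accM W 0 = mat 1"
| "accM W (Suc 0) = (1 + etaW W) *\<^sub>R (W ** mat 1) - etaW W *\<^sub>R mat 1"
| "accM W (Suc (Suc s)) = (1 + etaW W) *\<^sub>R (W ** accM W (Suc s)) - etaW W *\<^sub>R accM W s"

definition xbar :: "real^'p^'n \<Rightarrow> real^'p" where
  "xbar X = (1 / real CARD('n::finite)) *\<^sub>R (\<Sum>i\<in>UNIV. X $ i)"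

definition xtilde :: "real^'p^'n \<Rightarrow> real^'p^'n" where
  "xtilde X = (\<chi> i. X $ i - xbar X)"

definition favg :: "('n::finite \<Rightarrow> real^'p \<Rightarrow> real) \<Rightarrow> real^'p \<Rightarrow> real" where
  "favg fi x = (1 / real CARD('n)) * (\<Sum>i\<in>UNIV. fi i x)"

definition gavg :: "('n::finite \<Rightarrow> real^'p \<Rightarrow> real^'p) \<Rightarrow> real^'p \<Rightarrow> real^'p" where
  "gavg gfi x = (1 / real CARD('n)) *\<^sub>R (\<Sum>i\<in>UNIV. gfi i x)"

definition fstar :: "('n::finite \<Rightarrow> real^'p \<Rightarrow> real) \<Rightarrow> real" where
  "fstar fi = (INF x. favg fi x)"

text \<open>Stochastic gradient matrix nabla G_t: row i is g_i(z_{i,t}; xi_{i,t}),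
  with snapshot z_t = x_{beta * floor(t/beta)}.\<close>
definition stoch_grad ::
  "('n::finite \<Rightarrow> real^'p \<Rightarrow> 's \<Rightarrow> real^'p) \<Rightarrow> (nat \<Rightarrow> 'n \<Rightarrow> 'a \<Rightarrow> 's)
   \<Rightarrow> (nat \<Rightarrow> 'a \<Rightarrow> real^'p^'n) \<Rightarrow> nat \<Rightarrow> nat \<Rightarrow> 'a \<Rightarrow> real^'p^'n" where
  "stoch_grad g \<xi> x \<beta> t \<omega> = (\<chi> i. g i (x (\<beta> * (t div \<beta>)) \<omega> $ i) (\<xi> t i \<omega>))"

end

theory Submission
  imports Defs
begin


lemma measurable_vec_lambda:
  fixes f :: "'i::finite \<Rightarrow> 'a \<Rightarrow> 'b::euclidean_space"
  assumes "\<And>i. f i \<in> borel_measurable N"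
  shows "(\<lambda>\<omega>. \<chi> i. f i \<omega>) \<in> borel_measurable N"
proof (subst borel_measurable_euclidean_space, intro ballI)
  fix b :: "'b^'i" assume "b \<in> Basis"
  then obtain i u where b: "b = axis i u" by (auto simp: Basis_vec_def)
  have "(\<lambda>\<omega>. (\<chi> j. f j \<omega>) \<bullet> b) = (\<lambda>\<omega>. f i \<omega> \<bullet> u)" by (simp add: b inner_axis)
  moreover have "(\<lambda>\<omega>. f i \<omega> \<bullet> u) \<in> borel_measurable N" using assms[of i] by measurable
  ultimately show "(\<lambda>\<omega>. (\<chi> j. f j \<omega>) \<bullet> b) \<in> borel_measurable N" by simp
qed

lemma measurable_vec_nth:
  fixes f :: "'a \<Rightarrow> 'b::euclidean_space^'i::finite"
  assumes "f \<in> borel_measurable N"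
  shows "(\<lambda>\<omega>. f \<omega> $ i) \<in> borel_measurable N"
proof -
  have "continuous_on UNIV (\<lambda>v::'b^'i. v $ i)" by (intro continuous_intros)
  then show ?thesis using assms by (rule borel_measurable_continuous_on)
qed

lemma norm_sq_vec: "(norm (X :: 'b::real_normed_vector^'i::finite))\<^sup>2 = (\<Sum>i\<in>UNIV. (norm (X $ i))\<^sup>2)"
  by (simp add: norm_vec_def L2_set_def sum_nonneg)

lemma matmul_linear: "linear (\<lambda>Z::real^'p::finite^'n::finite. (A::real^'n^'m::finite) ** Z)"
  by (rule linearI) (simp_all add: matrix_add_ldistrib matrix_scalar_ac scalar_matrix_assoc)


lemma sum_sq_le_card: "(\<Sum>i\<in>I. (a i::real))\<^sup>2 \<le> real (card I) * (\<Sum>i\<in>I. (a i)\<^sup>2)"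
  using Cauchy_Schwarz_ineq_sum[of a "\<lambda>_. 1" I] by (simp add: mult.commute)

lemma descent_lemma:
  fixes F :: "'v::real_inner \<Rightarrow> real"
  assumes d: "\<And>v. (F has_derivative (\<lambda>h. G v \<bullet> h)) (at v)"
    and lip: "\<And>u v. norm (G u - G v) \<le> L * norm (u - v)"
  shows "F (u + e) \<le> F u + G u \<bullet> e + L/2 * (norm e)\<^sup>2"
proof -
  define \<phi> where "\<phi> t = F (u + t *\<^sub>R e) - t * (G u \<bullet> e) - L/2 * t\<^sup>2 * (norm e)\<^sup>2" for t
  have D: "(\<phi> has_real_derivative (G (u + t *\<^sub>R e) \<bullet> e - G u \<bullet> e - L * t * (norm e)\<^sup>2)) (at t)" for t
  proof -
    have "((\<lambda>t. u + t *\<^sub>R e) has_derivative (\<lambda>h. h *\<^sub>R e)) (at t)"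
      by (auto intro!: derivative_eq_intros)
    from has_derivative_compose[OF this d]
    have "((\<lambda>t. F (u + t *\<^sub>R e)) has_derivative (\<lambda>h. G (u + t *\<^sub>R e) \<bullet> (h *\<^sub>R e))) (at t)" .
    moreover have "(\<lambda>h. G (u + t *\<^sub>R e) \<bullet> (h *\<^sub>R e)) = (*) (G (u + t *\<^sub>R e) \<bullet> e)"
      by (auto simp: mult.commute)
    ultimately have "((\<lambda>t. F (u + t *\<^sub>R e)) has_real_derivative (G (u + t *\<^sub>R e) \<bullet> e)) (at t)"
      by (simp add: has_field_derivative_def)
    then show ?thesis unfolding \<phi>_def
      by (auto intro!: derivative_eq_intros simp: power2_eq_square)
  qed
  have "\<phi> 1 \<le> \<phi> 0"
  proof (rule DERIV_nonpos_imp_nonincreasing[of 0 1 \<phi>])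
    fix t :: real assume t: "0 \<le> t" "t \<le> 1"
    have "G (u + t *\<^sub>R e) \<bullet> e - G u \<bullet> e = (G (u + t *\<^sub>R e) - G u) \<bullet> e" by (simp add: inner_diff_left)
    also have "\<dots> \<le> norm (G (u + t *\<^sub>R e) - G u) * norm e" by (rule norm_cauchy_schwarz)
    also have "\<dots> \<le> L * norm (t *\<^sub>R e) * norm e" using lip[of "u + t *\<^sub>R e" u] by (simp add: mult_right_mono)
    also have "\<dots> = L * t * (norm e)\<^sup>2" using t by (simp add: power2_eq_square)
    finally show "\<exists>y. DERIV \<phi> t :> y \<and> y \<le> 0" using D[of t] by (intro exI[of _ "G (u + t *\<^sub>R e) \<bullet> e - G u \<bullet> e - L * t * (norm e)\<^sup>2"]) auto
  qed simp
  then show ?thesis by (simp add: \<phi>_def)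
qed

lemma favg_deriv:
  fixes fi :: "'n::finite \<Rightarrow> real^'p::finite \<Rightarrow> real" and gfi :: "'n \<Rightarrow> real^'p \<Rightarrow> real^'p"
  assumes "\<And>i v. (fi i has_derivative (\<lambda>h. gfi i v \<bullet> h)) (at v)"
  shows "(favg fi has_derivative (\<lambda>h. gavg gfi v \<bullet> h)) (at v)"
proof -
  have "((\<lambda>x. (1 / real CARD('n)) * (\<Sum>i\<in>UNIV. fi i x)) has_derivative
        (\<lambda>h. (1 / real CARD('n)) * (\<Sum>i\<in>(UNIV::'n::finite set). gfi i v \<bullet> h))) (at v)"
    by (intro has_derivative_mult_right has_derivative_sum assms)
  moreover have "(\<lambda>h. (1 / real CARD('n)) * (\<Sum>i\<in>(UNIV::'n set). gfi i v \<bullet> h)) = (\<lambda>h. gavg gfi v \<bullet> h)"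
    by (auto simp: gavg_def inner_sum_left)
  ultimately show ?thesis by (simp add: favg_def[abs_def])
qed

lemma gavg_lip:
  fixes gfi :: "'n::finite \<Rightarrow> real^'p::finite \<Rightarrow> real^'p"
  assumes "\<And>i u v. norm (gfi i u - gfi i v) \<le> L * norm (u - v)"
  shows "norm (gavg gfi u - gavg gfi v) \<le> L * norm (u - v)"
proof -
  have "gavg gfi u - gavg gfi v = (1 / real CARD('n)) *\<^sub>R (\<Sum>i\<in>UNIV. gfi i u - gfi i v)"
    by (simp add: gavg_def sum_subtractf scaleR_diff_right)
  also have "norm \<dots> \<le> (1 / real CARD('n)) * (\<Sum>i\<in>(UNIV::'n set). L * norm (u - v))"
  proof -
    have "norm (\<Sum>i\<in>UNIV. gfi i u - gfi i v) \<le> (\<Sum>i\<in>(UNIV::'n set). L * norm (u - v))"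
      by (rule sum_norm_le) (rule assms)
    then show ?thesis by (simp add: divide_le_eq mult.commute)
  qed
  also have "\<dots> = L * norm (u - v)" by simp
  finally show ?thesis .
qed

lemma grad_err:
  fixes gfi :: "'n::finite \<Rightarrow> real^'p::finite \<Rightarrow> real^'p"
  assumes "\<And>i u v. norm (gfi i u - gfi i v) \<le> L * norm (u - v)"
  shows "(norm (gavg gfi (xbar X) - (1 / real CARD('n)) *\<^sub>R (\<Sum>i\<in>UNIV. gfi i (X $ i))))\<^sup>2
         \<le> L\<^sup>2 / real CARD('n) * (norm (xtilde X))\<^sup>2"
proof -
  define n where "n = real CARD('n)"
  have n: "n > 0" by (simp add: n_def)
  have "gavg gfi (xbar X) - (1 / n) *\<^sub>R (\<Sum>i\<in>UNIV. gfi i (X $ i)) = (1 / n) *\<^sub>R (\<Sum>i\<in>UNIV. gfi i (xbar X) - gfi i (X $ i))"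
    by (simp add: gavg_def n_def sum_subtractf scaleR_diff_right)
  then have "norm (gavg gfi (xbar X) - (1 / n) *\<^sub>R (\<Sum>i\<in>UNIV. gfi i (X $ i))) \<le> (1 / n) * (\<Sum>i\<in>UNIV. L * norm (X $ i - xbar X))"
    using n by (simp add: sum_norm_le assms divide_right_mono norm_minus_commute)
  then have "(norm (gavg gfi (xbar X) - (1 / n) *\<^sub>R (\<Sum>i\<in>UNIV. gfi i (X $ i))))\<^sup>2 \<le> ((1 / n) * (\<Sum>i\<in>UNIV. L * norm (X $ i - xbar X)))\<^sup>2"
    by (rule power_mono) simp
  also have "\<dots> = (1/n)\<^sup>2 * (\<Sum>i\<in>UNIV. L * norm (X $ i - xbar X))\<^sup>2" by (simp add: power_mult_distrib power_divide)
  also have "\<dots> \<le> (1/n)\<^sup>2 * (n * (\<Sum>i\<in>UNIV. (L * norm (X $ i - xbar X))\<^sup>2))"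
    using sum_sq_le_card[of "\<lambda>i. L * norm (X $ i - xbar X)" UNIV] by (intro mult_left_mono) (auto simp: n_def)
  also have "\<dots> = L\<^sup>2 / n * (\<Sum>i\<in>UNIV. (norm (X $ i - xbar X))\<^sup>2)"
    using n by (simp add: power_mult_distrib sum_distrib_left power2_eq_square field_simps)
  also have "(\<Sum>i\<in>UNIV. (norm (X $ i - xbar X))\<^sup>2) = (norm (xtilde X))\<^sup>2"
    by (simp add: norm_sq_vec xtilde_def)
  finally show ?thesis by (simp add: n_def)
qed


lemma vec_sum_nth: "(\<Sum>i\<in>A. f i) $ c = (\<Sum>i\<in>A. f i $ c)"
  by (induction A rule: infinite_finite_induct) auto

definition colsum1 :: "real^'n^'n \<Rightarrow> bool" where
  "colsum1 A \<longleftrightarrow> (\<forall>j. (\<Sum>i\<in>UNIV. A $ i $ j) = 1)"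

lemma colsum_mult: "(\<Sum>i\<in>UNIV. (A ** B) $ i $ j) = (\<Sum>l\<in>UNIV. (\<Sum>i\<in>UNIV. A $ i $ l) * B $ l $ j)"
  by (simp add: matrix_matrix_mult_def sum_distrib_right) (rule sum.swap)

lemma colsum1_mult: "colsum1 A \<Longrightarrow> colsum1 B \<Longrightarrow> colsum1 (A ** B)"
  unfolding colsum1_def by (simp add: colsum_mult)

lemma colsum1_mat1: "colsum1 (mat 1 :: real^'n^'n)"
  unfolding colsum1_def by (simp add: mat_def)

lemma colsum1_comb: "colsum1 A \<Longrightarrow> colsum1 B \<Longrightarrow> colsum1 ((1 + e) *\<^sub>R A - e *\<^sub>R B)"
  unfolding colsum1_def by (simp add: sum_subtractf sum.distrib algebra_simps flip: sum_distrib_left)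

lemma colsum1_matpow: "colsum1 W \<Longrightarrow> colsum1 (matpow W a)"
  by (induction a) (auto simp: matpow_def colsum1_mat1 colsum1_mult)

lemma colsum1_accM: "colsum1 W \<Longrightarrow> colsum1 (accM W s) \<and> colsum1 (accM W (Suc s))"
proof (induction s)
  case 0 then show ?case by (simp add: colsum1_mat1 colsum1_comb colsum1_mult)
next
  case (Suc s) then show ?case by (simp add: colsum1_comb colsum1_mult)
qed

lemma xbar_mult:
  fixes Z :: "real^'p::finite^'n::finite"
  assumes "colsum1 A" shows "xbar (A ** Z) = xbar Z"
proof -
  have "(\<Sum>i\<in>UNIV. (A ** Z) $ i) = (\<Sum>i\<in>UNIV. Z $ i)"
  proof (subst vec_eq_iff, intro allI)
    fix c
    have "(\<Sum>i\<in>UNIV. (A ** Z) $ i) $ c = (\<Sum>i\<in>UNIV. (A ** Z) $ i $ c)" by (rule vec_sum_nth)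
    also have "\<dots> = (\<Sum>l\<in>UNIV. (\<Sum>i\<in>UNIV. A $ i $ l) * Z $ l $ c)" by (rule colsum_mult)
    also have "\<dots> = (\<Sum>l\<in>UNIV. Z $ l $ c)" using assms by (simp add: colsum1_def)
    also have "\<dots> = (\<Sum>i\<in>UNIV. Z $ i) $ c" by (rule vec_sum_nth[symmetric])
    finally show "(\<Sum>i\<in>UNIV. (A ** Z) $ i) $ c = (\<Sum>i\<in>UNIV. Z $ i) $ c" .
  qed
  then show ?thesis by (simp add: xbar_def)
qed

lemma xbar_add: "xbar (X + Y) = xbar X + xbar Y"
  by (simp add: xbar_def sum.distrib scaleR_add_right)
lemma xbar_diff: "xbar (X - Y) = xbar X - xbar Y"
  by (simp add: xbar_def sum_subtractf scaleR_diff_right)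
lemma xbar_scaleR: "xbar (c *\<^sub>R X) = c *\<^sub>R xbar X"
  by (simp add: xbar_def scaleR_sum_right)
lemma xbar_zero: "xbar 0 = 0" by (simp add: xbar_def)
lemma xbar_sum: "xbar (\<Sum>j\<in>A. X j) = (\<Sum>j\<in>A. xbar (X j))"
  by (induction A rule: infinite_finite_induct) (auto simp: xbar_add xbar_zero)

lemma colsum1_ds: "doubly_stochastic W \<Longrightarrow> colsum1 W"
  by (simp add: doubly_stochastic_def colsum1_def)


locale flex =
  fixes M :: "'a measure"
    and D :: "'n::finite \<Rightarrow> 's measure"
    and \<xi> :: "nat \<Rightarrow> 'n \<Rightarrow> 'a \<Rightarrow> 's"
    and fi :: "'n \<Rightarrow> real^'p::finite \<Rightarrow> real"
    and gfi :: "'n \<Rightarrow> real^'p \<Rightarrow> real^'p"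
    and g :: "'n \<Rightarrow> real^'p \<Rightarrow> 's \<Rightarrow> real^'p"
    and W Wbar :: "real^'n^'n"
    and x y :: "nat \<Rightarrow> 'a \<Rightarrow> real^'p^'n"
    and x0 :: "real^'p^'n"
    and L \<sigma> \<gamma> :: real
    and \<alpha> \<beta> :: nat
  assumes M: "prob_space M"
    and \<xi>_meas: "\<And>t i. \<xi> t i \<in> measurable M (D i)"
    and \<xi>_distr: "\<And>t i. distr M (D i) (\<xi> t i) = D i"
    and \<xi>_indep: "prob_space.indep_vars M (\<lambda>(t,i). D i) (\<lambda>(t,i). \<xi> t i) UNIV"
    and g_meas: "\<And>i. (\<lambda>(v,s). g i v s) \<in> borel_measurable (borel \<Otimes>\<^sub>M D i)"
    and g_unbiased: "\<And>i v. integrable (D i) (g i v) \<and> (\<integral>s. g i v s \<partial>D i) = gfi i v"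
    and g_var: "\<And>i v. (\<integral>\<^sup>+ s. ennreal ((norm (g i v s - gfi i v))\<^sup>2) \<partial>D i) \<le> ennreal (\<sigma>\<^sup>2)"
    and f_grad: "\<And>i v. (fi i has_derivative (\<lambda>h. gfi i v \<bullet> h)) (at v)"
    and f_lip: "\<And>i u v. norm (gfi i u - gfi i v) \<le> L * norm (u - v)"
    and f_bdd: "bdd_below (range (favg fi))"
    and W_ds: "doubly_stochastic W"
    and W_rho: "rhoW W < 1"
    and \<alpha>: "\<alpha> \<ge> 1" and \<beta>: "\<beta> \<ge> 1" and \<gamma>_pos: "\<gamma> > 0"
    and Wbar: "Wbar = matpow W \<alpha> \<or> Wbar = accM W \<alpha>"
    and x_init: "\<And>\<omega>. x 0 \<omega> = x0"
    and y_init: "\<And>\<omega>. y 0 \<omega> = stoch_grad g \<xi> x \<beta> 0 \<omega>"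
    and x_inner: "\<And>k j \<omega>. j + 2 \<le> \<beta> \<Longrightarrow>
         x (\<beta> * k + j + 1) \<omega> = x (\<beta> * k + j) \<omega> - \<gamma> *\<^sub>R y (\<beta> * k + j) \<omega>"
    and y_inner: "\<And>k j \<omega>. j + 2 \<le> \<beta> \<Longrightarrow>
         y (\<beta> * k + j + 1) \<omega> = y (\<beta> * k + j) \<omega>
            + stoch_grad g \<xi> x \<beta> (\<beta> * k + j + 1) \<omega> - stoch_grad g \<xi> x \<beta> (\<beta> * k + j) \<omega>"
    and x_round: "\<And>k \<omega>. x (\<beta> * (k + 1)) \<omega> =
         Wbar ** (x (\<beta> * k) \<omega> - \<gamma> *\<^sub>R (\<Sum>j<\<beta>. y (\<beta> * k + j) \<omega>))"
    and y_round: "\<And>k \<omega>. y (\<beta> * (k + 1)) \<omega> =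
         Wbar ** (y (\<beta> * k) \<omega> + stoch_grad g \<xi> x \<beta> (\<beta> * (k + 1)) \<omega>
                   - stoch_grad g \<xi> x \<beta> (\<beta> * k) \<omega>)"
    and \<gamma>_le: "\<gamma> \<le> 1 / (4 * L * real \<beta>)"
begin

abbreviation "G \<equiv> stoch_grad g \<xi> x \<beta>"
abbreviation "nn \<equiv> real CARD('n)"

lemma L_pos: "L > 0"
proof (rule ccontr)
  assume "\<not> L > 0"
  then have "4 * L * real \<beta> \<le> 0" using \<beta> by (simp add: mult_nonpos_nonneg)
  then have "1 / (4 * L * real \<beta>) \<le> 0" by (simp add: divide_nonpos_nonpos divide_le_0_iff)
  then show False using \<gamma>_le \<gamma>_pos by linarith
qed

lemma \<gamma>\<beta>L: "\<gamma> * real \<beta> * L \<le> 1/4"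
proof -
  have "0 < 4 * L * real \<beta>" using L_pos \<beta> by simp
  then have "\<gamma> * (4 * L * real \<beta>) \<le> 1" using \<gamma>_le by (simp add: le_divide_eq)
  then show ?thesis by (simp add: algebra_simps)
qed

lemma colsum_Wbar: "colsum1 Wbar"
  using Wbar colsum1_matpow[OF colsum1_ds[OF W_ds]] colsum1_accM[OF colsum1_ds[OF W_ds]] by auto

lemma xbar_Wbar: "xbar (Wbar ** Z) = xbar Z"
  by (rule xbar_mult[OF colsum_Wbar])

lemma G_round: "j < \<beta> \<Longrightarrow> G (\<beta> * k + j) \<omega> = (\<chi> i. g i (x (\<beta> * k) \<omega> $ i) (\<xi> (\<beta> * k + j) i \<omega>))"
  by (simp add: stoch_grad_def)

lemma y_in_round: "j < \<beta> \<Longrightarrow> y (\<beta> * k + j) \<omega> = y (\<beta> * k) \<omega> + G (\<beta> * k + j) \<omega> - G (\<beta> * k) \<omega>"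
proof (induction j)
  case 0 then show ?case by simp
next
  case (Suc j)
  then have "y (\<beta> * k + j + 1) \<omega> = y (\<beta> * k + j) \<omega> + G (\<beta> * k + j + 1) \<omega> - G (\<beta> * k + j) \<omega>"
    by (intro y_inner) simp
  with Suc show ?case by simp
qed

lemma ybar_round: "xbar (y (\<beta> * k) \<omega>) = xbar (G (\<beta> * k) \<omega>)"
proof (induction k)
  case 0 then show ?case using y_init[of \<omega>] by simp
next
  case (Suc k)
  have "xbar (y (\<beta> * (k + 1)) \<omega>) = xbar (y (\<beta> * k) \<omega>) + xbar (G (\<beta> * (k + 1)) \<omega>) - xbar (G (\<beta> * k) \<omega>)"
    by (simp only: y_round xbar_Wbar xbar_add xbar_diff)
  with Suc show ?case by simp
qed

lemma ybar: "j < \<beta> \<Longrightarrow> xbar (y (\<beta> * k + j) \<omega>) = xbar (G (\<beta> * k + j) \<omega>)"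
  using y_in_round[of j k \<omega>] ybar_round[of k \<omega>] by (simp add: xbar_add xbar_diff)

lemma xbar_step: "xbar (x (\<beta> * (k + 1)) \<omega>) = xbar (x (\<beta> * k) \<omega>) - \<gamma> *\<^sub>R (\<Sum>j<\<beta>. xbar (G (\<beta> * k + j) \<omega>))"
proof -
  have "(\<Sum>j<\<beta>. xbar (y (\<beta> * k + j) \<omega>)) = (\<Sum>j<\<beta>. xbar (G (\<beta> * k + j) \<omega>))"
    by (rule sum.cong) (auto intro: ybar)
  then show ?thesis by (simp only: x_round xbar_Wbar xbar_diff xbar_scaleR xbar_sum)
qed

lemma x_step: "x (\<beta> * (k + 1)) \<omega> = Wbar ** (x (\<beta> * k) \<omega> - \<gamma> *\<^sub>R (\<Sum>j<\<beta>. y (\<beta> * k) \<omega> + G (\<beta> * k + j) \<omega> - G (\<beta> * k) \<omega>))"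
proof -
  have "(\<Sum>j<\<beta>. y (\<beta> * k + j) \<omega>) = (\<Sum>j<\<beta>. y (\<beta> * k) \<omega> + G (\<beta> * k + j) \<omega> - G (\<beta> * k) \<omega>)"
    by (rule sum.cong) (auto intro: y_in_round)
  then show ?thesis by (simp only: x_round)
qed

end


lemma matmul_meas[measurable]:
  fixes A :: "real^'n::finite^'m::finite"
  assumes "f \<in> borel_measurable N"
  shows "(\<lambda>\<omega>. A ** (f \<omega> :: real^'p::finite^'n)) \<in> borel_measurable N"
proof -
  have "continuous_on UNIV (\<lambda>Z::real^'p^'n. A ** Z)"
    by (rule linear_continuous_on) (simp add: linear_conv_bounded_linear[symmetric] matmul_linear)
  then show ?thesis using assms by (rule borel_measurable_continuous_on)
qed

context flex begin

definition "Xi = (\<lambda>(t,i). \<xi> t i)"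
definition "MD = (\<lambda>(t::nat,i). D i)"
definition "PP m = ({..<m} \<times> (UNIV :: 'n set))"
definition "Past m \<omega> = restrict (\<lambda>ti. Xi ti \<omega>) (PP m)"
definition "NN m = vimage_algebra (space M) (Past m) (PiM (PP m) MD)"

lemma Xi_meas: "Xi ti \<in> measurable M (MD ti)"
  by (cases ti) (simp add: Xi_def MD_def \<xi>_meas)

lemma Past_meas: "Past m \<in> measurable M (PiM (PP m) MD)"
  unfolding Past_def by (rule measurable_restrict) (rule Xi_meas)

lemma space_NN[simp]: "space (NN m) = space M"
  by (simp add: NN_def)

lemma id_M_NN: "(\<lambda>\<omega>. \<omega>) \<in> measurable M (NN m)"
  unfolding NN_def by (rule measurable_vimage_algebra2) (auto simp: Past_meas)

lemma NN_M: "f \<in> measurable (NN m) Y \<Longrightarrow> f \<in> measurable M Y"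
  using measurable_comp[OF id_M_NN] by (simp add: comp_def)

lemma Past_NN: "Past m \<in> measurable (NN m) (PiM (PP m) MD)"
  unfolding NN_def by (rule measurable_vimage_algebra1) (use Past_meas in \<open>auto dest: measurable_space\<close>)

lemma id_NN_mono: "m \<le> m' \<Longrightarrow> (\<lambda>\<omega>. \<omega>) \<in> measurable (NN m') (NN m)"
proof -
  assume mm: "m \<le> m'"
  have sub: "PP m \<subseteq> PP m'" using mm by (auto simp: PP_def)
  have eq: "Past m \<omega> = restrict (Past m' \<omega>) (PP m)" for \<omega>
    using sub by (auto simp: Past_def restrict_def fun_eq_iff subset_iff)
  have "(\<lambda>\<omega>. restrict (Past m' \<omega>) (PP m)) \<in> measurable (NN m') (PiM (PP m) MD)"
    by (rule measurable_compose[OF Past_NN measurable_restrict_subset[OF sub]])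
  then have "(\<lambda>\<omega>. Past m \<omega>) \<in> measurable (NN m') (PiM (PP m) MD)" by (simp add: eq)
  then show ?thesis unfolding NN_def[of m]
    by (intro measurable_vimage_algebra2) auto
qed

lemma NN_mono: "f \<in> measurable (NN m) Y \<Longrightarrow> m \<le> m' \<Longrightarrow> f \<in> measurable (NN m') Y"
  using measurable_comp[OF id_NN_mono] by (simp add: comp_def)

lemma \<xi>_NN: "t < m \<Longrightarrow> \<xi> t i \<in> measurable (NN m) (D i)"
proof -
  assume "t < m"
  then have ti: "(t,i) \<in> PP m" by (simp add: PP_def)
  have "(\<lambda>\<omega>. Past m \<omega> (t,i)) \<in> measurable (NN m) (MD (t,i))"
    by (rule measurable_compose[OF Past_NN measurable_component_singleton[OF ti]])
  moreover have "Past m \<omega> (t,i) = \<xi> t i \<omega>" for \<omega> using ti by (simp add: Past_def Xi_def)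
  ultimately show ?thesis by (simp add: MD_def)
qed

lemma g_comp_meas:
  assumes "a \<in> borel_measurable N" "b \<in> measurable N (D i)"
  shows "(\<lambda>\<omega>. g i (a \<omega>) (b \<omega>)) \<in> borel_measurable N"
  using measurable_compose[OF measurable_Pair[OF assms] g_meas[of i]] by simp

lemma G_meas_NN:
  assumes "x (\<beta> * k) \<in> borel_measurable (NN m)" "j < \<beta>" "\<beta> * k + j < m"
  shows "G (\<beta> * k + j) \<in> borel_measurable (NN m)"
proof -
  have "(\<lambda>\<omega>. \<chi> i. g i (x (\<beta> * k) \<omega> $ i) (\<xi> (\<beta> * k + j) i \<omega>)) \<in> borel_measurable (NN m)"
    by (intro measurable_vec_lambda g_comp_meas measurable_vec_nth assms \<xi>_NN)
  moreover have "G (\<beta> * k + j) = (\<lambda>\<omega>. \<chi> i. g i (x (\<beta> * k) \<omega> $ i) (\<xi> (\<beta> * k + j) i \<omega>))"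
    using G_round[OF assms(2)] by auto
  ultimately show ?thesis by simp
qed

lemma xy_meas: "x (\<beta> * k) \<in> borel_measurable (NN (\<beta> * k)) \<and> y (\<beta> * k) \<in> borel_measurable (NN (\<beta> * k + 1))"
proof (induction k)
  case 0
  have xc: "x 0 = (\<lambda>\<omega>. x0)" using x_init by auto
  then have x0m: "x 0 \<in> borel_measurable (NN 1)" by simp
  have x00: "x 0 \<in> borel_measurable (NN 0)" using xc by simp
  have "G (\<beta> * 0 + 0) \<in> borel_measurable (NN 1)" by (rule G_meas_NN) (use x0m \<beta> in auto)
  moreover have "y 0 = G 0" using y_init by auto
  ultimately show ?case using x00 by simp
next
  case (Suc k)
  define m where "m = \<beta> * (k + 1)"
  have le1: "\<beta> * k \<le> m" "\<beta> * k + 1 \<le> m" using \<beta> by (simp_all add: m_def)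
  have xk: "x (\<beta> * k) \<in> borel_measurable (NN m)"
    by (rule NN_mono[OF conjunct1[OF Suc.IH] le1(1)])
  have yk: "y (\<beta> * k) \<in> borel_measurable (NN m)"
    by (rule NN_mono[OF conjunct2[OF Suc.IH] le1(2)])
  have Gk: "G (\<beta> * k + j) \<in> borel_measurable (NN m)" if "j < \<beta>" for j
    by (rule G_meas_NN[OF xk that]) (use that in \<open>simp add: m_def\<close>)
  have Gk0: "G (\<beta> * k) \<in> borel_measurable (NN m)" using Gk[of 0] \<beta> by simp
  have S: "(\<lambda>\<omega>. \<Sum>j<\<beta>. y (\<beta> * k) \<omega> + G (\<beta> * k + j) \<omega> - G (\<beta> * k) \<omega>) \<in> borel_measurable (NN m)"
  proof (rule borel_measurable_sum)
    fix j assume "j \<in> {..<\<beta>}"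
    then have "j < \<beta>" by simp
    from Gk[OF this] show "(\<lambda>\<omega>. y (\<beta> * k) \<omega> + G (\<beta> * k + j) \<omega> - G (\<beta> * k) \<omega>) \<in> borel_measurable (NN m)"
      by (intro borel_measurable_diff borel_measurable_add yk Gk0)
  qed
  have "x (\<beta> * (k + 1)) = (\<lambda>\<omega>. Wbar ** (x (\<beta> * k) \<omega> - \<gamma> *\<^sub>R (\<Sum>j<\<beta>. y (\<beta> * k) \<omega> + G (\<beta> * k + j) \<omega> - G (\<beta> * k) \<omega>)))"
    using x_step by auto
  also have "\<dots> \<in> borel_measurable (NN m)"
    by (intro matmul_meas borel_measurable_diff borel_measurable_scaleR xk S borel_measurable_const)
  finally have xk1: "x (\<beta> * (k + 1)) \<in> borel_measurable (NN m)" .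
  have xk1': "x (\<beta> * (k + 1)) \<in> borel_measurable (NN (m + 1))" by (rule NN_mono[OF xk1]) simp
  have "G (\<beta> * (k + 1) + 0) \<in> borel_measurable (NN (m + 1))"
    by (rule G_meas_NN) (use xk1' \<beta> in \<open>simp_all add: m_def\<close>)
  then have G1: "G (\<beta> * (k + 1)) \<in> borel_measurable (NN (m + 1))" by simp
  have yk': "y (\<beta> * k) \<in> borel_measurable (NN (m + 1))" by (rule NN_mono[OF yk]) simp
  have Gk0': "G (\<beta> * k) \<in> borel_measurable (NN (m + 1))" by (rule NN_mono[OF Gk0]) simp
  have "y (\<beta> * (k + 1)) = (\<lambda>\<omega>. Wbar ** (y (\<beta> * k) \<omega> + G (\<beta> * (k + 1)) \<omega> - G (\<beta> * k) \<omega>))"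
    using y_round by auto
  also have "\<dots> \<in> borel_measurable (NN (m + 1))"
    by (intro matmul_meas borel_measurable_diff borel_measurable_add yk' G1 Gk0')
  finally have yk1: "y (\<beta> * (k + 1)) \<in> borel_measurable (NN (m + 1))" .
  show ?case using xk1 yk1 by (simp add: m_def)
qed
end


lemma indep_tonelli:
  assumes P: "prob_space M"
  and rvX: "X \<in> measurable M S" and rvY: "Y \<in> measurable M T"
  and deq: "distr M S X \<Otimes>\<^sub>M distr M T Y = distr M (S \<Otimes>\<^sub>M T) (\<lambda>x. (X x, Y x))"
  and F: "F \<in> borel_measurable (S \<Otimes>\<^sub>M T)"
  shows "(\<integral>\<^sup>+\<omega>. F (X \<omega>, Y \<omega>) \<partial>M) = (\<integral>\<^sup>+\<omega>. (\<integral>\<^sup>+\<omega>'. F (X \<omega>, Y \<omega>') \<partial>M) \<partial>M)"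
proof -
  interpret prob_space M by fact
  note rv = rvX rvY
  interpret PY: prob_space "distr M T Y" by (rule prob_space_distr) fact
  have F': "F \<in> borel_measurable (distr M S X \<Otimes>\<^sub>M distr M T Y)"
    using F by (simp add: measurable_cong_sets[OF sets_pair_measure_cong[OF sets_distr sets_distr] refl])
  have "(\<integral>\<^sup>+\<omega>. F (X \<omega>, Y \<omega>) \<partial>M) = integral\<^sup>N (distr M (S \<Otimes>\<^sub>M T) (\<lambda>x. (X x, Y x))) F"
    using rv F by (subst nn_integral_distr) auto
  also have "\<dots> = integral\<^sup>N (distr M S X \<Otimes>\<^sub>M distr M T Y) F" by (simp add: deq)
  also have "\<dots> = (\<integral>\<^sup>+ x. \<integral>\<^sup>+ y. F (x, y) \<partial>distr M T Y \<partial>distr M S X)"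
    using PY.nn_integral_fst[OF F'] by simp
  also have "\<dots> = (\<integral>\<^sup>+ x. \<integral>\<^sup>+ \<omega>'. F (x, Y \<omega>') \<partial>M \<partial>distr M S X)"
    using rv F by (intro nn_integral_cong, subst nn_integral_distr) auto
  also have "\<dots> = (\<integral>\<^sup>+\<omega>. (\<integral>\<^sup>+\<omega>'. F (X \<omega>, Y \<omega>') \<partial>M) \<partial>M)"
  proof (subst nn_integral_distr)
    show "(\<lambda>x. \<integral>\<^sup>+ \<omega>'. F (x, Y \<omega>') \<partial>M) \<in> borel_measurable (distr M S X)"
    proof -
      have A: "(\<lambda>x. \<integral>\<^sup>+ y. F (x, y) \<partial>distr M T Y) \<in> borel_measurable (distr M S X)"
        using PY.borel_measurable_nn_integral_fst[OF F'] by simp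
      have B: "\<And>x. x \<in> space (distr M S X) \<Longrightarrow> (\<integral>\<^sup>+ y. F (x, y) \<partial>distr M T Y) = (\<integral>\<^sup>+ \<omega>'. F (x, Y \<omega>') \<partial>M)"
        using rv F by (subst nn_integral_distr) auto
      show ?thesis using A by (subst measurable_cong[OF B[symmetric]]) auto
    qed
  qed (use rv in auto)
  finally show ?thesis .
qed

lemma indep_pair_distr:
  assumes P: "prob_space M" and rvs: "X \<in> measurable M S" "Y \<in> measurable M T"
  and ind: "prob_space.indep_set M (sigma_sets (space M) {X -` A \<inter> space M | A. A \<in> sets S})
                    (sigma_sets (space M) {Y -` A \<inter> space M | A. A \<in> sets T})"
  shows "distr M S X \<Otimes>\<^sub>M distr M T Y = distr M (S \<Otimes>\<^sub>M T) (\<lambda>x. (X x, Y x))"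
proof -
  interpret prob_space M by fact
  have XY: "random_variable (S \<Otimes>\<^sub>M T) (\<lambda>x. (X x, Y x))"
    using rvs by (rule measurable_Pair)
  let ?S = "distr M S X" and ?T = "distr M T Y" and ?J = "distr M (S \<Otimes>\<^sub>M T) (\<lambda>x. (X x, Y x))"
  interpret X: prob_space ?S by (rule prob_space_distr) fact
  interpret Y: prob_space ?T by (rule prob_space_distr) fact
  interpret XY: pair_prob_space ?S ?T ..
  show "?S \<Otimes>\<^sub>M ?T = ?J"
  proof (rule pair_measure_eqI)
    show "sigma_finite_measure ?S" ..
    show "sigma_finite_measure ?T" ..
    fix A B assume A: "A \<in> sets ?S" and B: "B \<in> sets ?T"
    have "emeasure ?J (A \<times> B) = emeasure M ((\<lambda>x. (X x, Y x)) -` (A \<times> B) \<inter> space M)"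
      using A B by (intro emeasure_distr[OF XY]) auto
    also have "(\<lambda>x. (X x, Y x)) -` (A \<times> B) \<inter> space M = (X -` A \<inter> space M) \<inter> (Y -` B \<inter> space M)" by auto
    also have "emeasure M \<dots> = emeasure M (X -` A \<inter> space M) * emeasure M (Y -` B \<inter> space M)"
    proof -
      have a: "X -` A \<inter> space M \<in> sigma_sets (space M) {X -` A \<inter> space M | A. A \<in> sets S}"
        using A by (intro sigma_sets.Basic) auto
      have b: "Y -` B \<inter> space M \<in> sigma_sets (space M) {Y -` A \<inter> space M | A. A \<in> sets T}"
        using B by (intro sigma_sets.Basic) auto
      show ?thesis using indep_setD[OF ind a b]
        by (simp add: emeasure_eq_measure measure_nonneg ennreal_mult)
    qed
    also have "\<dots> = emeasure ?S A * emeasure ?T B"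
      using rvs A B by (simp add: emeasure_distr)
    finally show "emeasure ?S A * emeasure ?T B = emeasure ?J (A \<times> B)" by simp
  qed simp
qed

context flex begin

definition "Blk k = ({\<beta> * k..<\<beta> * k + \<beta>} \<times> (UNIV :: 'n set))"
definition "RR k \<omega> = restrict (\<lambda>ti. Xi ti \<omega>) (Blk k)"

lemma RR_meas: "RR k \<in> measurable M (PiM (Blk k) MD)"
  unfolding RR_def by (rule measurable_restrict) (rule Xi_meas)

lemma x_meas: "x (\<beta> * k) \<in> borel_measurable M"
  using xy_meas NN_M by blast

lemma indep_xR: "distr M borel (x (\<beta> * k)) \<Otimes>\<^sub>M distr M (PiM (Blk k) MD) (RR k)
   = distr M (borel \<Otimes>\<^sub>M PiM (Blk k) MD) (\<lambda>\<omega>. (x (\<beta> * k) \<omega>, RR k \<omega>))"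
proof -
  interpret prob_space M by (rule M)
  have ind0: "indep_vars MD Xi UNIV" using \<xi>_indep by (simp add: MD_def Xi_def)
  have disj: "PP (\<beta> * k) \<inter> Blk k = {}" by (auto simp: PP_def Blk_def)
  have "indep_var (PiM (PP (\<beta> * k)) MD) (Past (\<beta> * k)) (PiM (Blk k) MD) (RR k)"
    using indep_var_restrict[OF ind0 disj] by (simp add: Past_def[abs_def] RR_def[abs_def])
  then have rv: "random_variable (PiM (Blk k) MD) (RR k)" and
    ind1: "indep_set (sigma_sets (space M) {Past (\<beta> * k) -` A \<inter> space M | A. A \<in> sets (PiM (PP (\<beta> * k)) MD)})
                    (sigma_sets (space M) {RR k -` A \<inter> space M | A. A \<in> sets (PiM (Blk k) MD)})"
    unfolding indep_var_eq by auto
  have xm: "x (\<beta> * k) \<in> borel_measurable (NN (\<beta> * k))" using xy_meas by blast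
  have sub: "sigma_sets (space M) {x (\<beta> * k) -` A \<inter> space M | A. A \<in> sets borel}
     \<subseteq> sigma_sets (space M) {Past (\<beta> * k) -` A \<inter> space M | A. A \<in> sets (PiM (PP (\<beta> * k)) MD)}"
  proof -
    have "{x (\<beta> * k) -` A \<inter> space M | A. A \<in> sets borel} \<subseteq> sets (NN (\<beta> * k))"
      using measurable_sets[OF xm] by auto
    then have "sigma_sets (space (NN (\<beta> * k))) {x (\<beta> * k) -` A \<inter> space M | A. A \<in> sets borel} \<subseteq> sets (NN (\<beta> * k))"
      by (rule sets.sigma_sets_subset)
    then have "sigma_sets (space M) {x (\<beta> * k) -` A \<inter> space M | A. A \<in> sets borel} \<subseteq> sets (NN (\<beta> * k))"
      by simp
    then show ?thesis by (simp add: NN_def sets_vimage_algebra)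
  qed
  have ind2: "indep_set (sigma_sets (space M) {x (\<beta> * k) -` A \<inter> space M | A. A \<in> sets borel})
                    (sigma_sets (space M) {RR k -` A \<inter> space M | A. A \<in> sets (PiM (Blk k) MD)})"
    unfolding indep_set_def
    by (rule indep_sets_mono_sets[OF ind1[unfolded indep_set_def]]) (use sub in \<open>auto split: bool.split\<close>)
  show ?thesis by (rule indep_pair_distr[OF M x_meas RR_meas ind2])
qed

lemma round_tonelli:
  assumes "F \<in> borel_measurable (borel \<Otimes>\<^sub>M PiM (Blk k) MD)"
  shows "(\<integral>\<^sup>+\<omega>. F (x (\<beta> * k) \<omega>, RR k \<omega>) \<partial>M) = (\<integral>\<^sup>+\<omega>. (\<integral>\<^sup>+\<omega>'. F (x (\<beta> * k) \<omega>, RR k \<omega>') \<partial>M) \<partial>M)"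
  by (rule indep_tonelli[OF M x_meas RR_meas indep_xR assms])

end


context flex begin

lemma Xi_distr: "distr M (MD ti) (Xi ti) = MD ti"
  by (cases ti) (simp add: MD_def Xi_def \<xi>_distr)

lemma indep_pair_comp:
  assumes "ta \<noteq> tb" and fa: "fa \<in> borel_measurable (MD ta)" and fb: "fb \<in> borel_measurable (MD tb)"
  shows "prob_space.indep_var M borel (\<lambda>\<omega>. fa (Xi ta \<omega>) :: real) borel (\<lambda>\<omega>. fb (Xi tb \<omega>))"
proof -
  interpret prob_space M by (rule M)
  have ind0: "indep_vars MD Xi UNIV" using \<xi>_indep by (simp add: MD_def Xi_def)
  have disj: "{ta} \<inter> {tb} = {}" using assms by auto
  have I: "indep_var (PiM {ta} MD) (\<lambda>\<omega>. restrict (\<lambda>i. Xi i \<omega>) {ta}) (PiM {tb} MD) (\<lambda>\<omega>. restrict (\<lambda>i. Xi i \<omega>) {tb})"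
    using indep_var_restrict[OF ind0 disj] by simp
  have m1: "(\<lambda>h. fa (h ta)) \<in> borel_measurable (PiM {ta} MD)"
    using measurable_compose[OF measurable_component_singleton[of ta "{ta}" MD] fa] by simp
  have m2: "(\<lambda>h. fb (h tb)) \<in> borel_measurable (PiM {tb} MD)"
    using measurable_compose[OF measurable_component_singleton[of tb "{tb}" MD] fb] by simp
  from indep_var_compose[OF I m1 m2] show ?thesis by (simp add: comp_def)
qed

lemma var_bound:
  fixes A :: "'b set" and \<tau> :: "'b \<Rightarrow> nat \<times> 'n" and d :: "'b \<Rightarrow> 's \<Rightarrow> real^'p" and c :: "real^'p"
  assumes A: "finite A" and inj: "inj_on \<tau> A" and s2: "s2 \<ge> 0"
    and dm: "\<And>a. a \<in> A \<Longrightarrow> d a \<in> borel_measurable (MD (\<tau> a))"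
    and di: "\<And>a. a \<in> A \<Longrightarrow> integrable (MD (\<tau> a)) (d a)"
    and d0: "\<And>a. a \<in> A \<Longrightarrow> (\<integral>s. d a s \<partial>MD (\<tau> a)) = 0"
    and dv: "\<And>a. a \<in> A \<Longrightarrow> (\<integral>\<^sup>+s. ennreal ((norm (d a s))\<^sup>2) \<partial>MD (\<tau> a)) \<le> ennreal s2"
  shows "(\<integral>\<^sup>+\<omega>. ennreal ((norm (c + (\<Sum>a\<in>A. d a (Xi (\<tau> a) \<omega>))))\<^sup>2) \<partial>M) \<le> ennreal ((norm c)\<^sup>2 + real (card A) * s2)"
proof -
  interpret prob_space M by (rule M)
  define Z where "Z a \<omega> = d a (Xi (\<tau> a) \<omega>)" for a \<omega>
  have Zm: "Z a \<in> borel_measurable M" if "a \<in> A" for a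
    unfolding Z_def using measurable_compose[OF Xi_meas dm[OF that]] .
  have Zi: "integrable M (Z a)" if "a \<in> A" for a
    using di[OF that] integrable_distr_eq[OF Xi_meas dm[OF that]] by (simp add: Xi_distr Z_def[abs_def])
  have Z0: "(\<integral>\<omega>. Z a \<omega> \<partial>M) = 0" if "a \<in> A" for a
    using d0[OF that] integral_distr[OF Xi_meas dm[OF that]] by (simp add: Xi_distr Z_def)
  have Zv: "(\<integral>\<^sup>+\<omega>. ennreal ((norm (Z a \<omega>))\<^sup>2) \<partial>M) \<le> ennreal s2" if "a \<in> A" for a
  proof -
    have "(\<lambda>s. ennreal ((norm (d a s))\<^sup>2)) \<in> borel_measurable (MD (\<tau> a))" using dm[OF that] by measurable
    then show ?thesis using dv[OF that] nn_integral_distr[OF Xi_meas] by (simp add: Xi_distr Z_def)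
  qed
  have Zsqm: "(\<lambda>\<omega>. (norm (Z a \<omega>))\<^sup>2) \<in> borel_measurable M" if "a \<in> A" for a
    using Zm[OF that] by measurable
  have Zsqi: "integrable M (\<lambda>\<omega>. (norm (Z a \<omega>))\<^sup>2)" if "a \<in> A" for a
  proof -
    have "(\<integral>\<^sup>+\<omega>. ennreal (norm ((norm (Z a \<omega>))\<^sup>2)) \<partial>M) < \<infinity>"
      using Zv[OF that] by (simp add: le_less_trans[OF _ ennreal_less_top])
    then show ?thesis using Zsqm[OF that] by (simp add: integrable_iff_bounded)
  qed
  have Zsqv: "(\<integral>\<omega>. (norm (Z a \<omega>))\<^sup>2 \<partial>M) \<le> s2" if "a \<in> A" for a
  proof -
    have "(\<integral>\<omega>. (norm (Z a \<omega>))\<^sup>2 \<partial>M) = enn2real (\<integral>\<^sup>+\<omega>. ennreal ((norm (Z a \<omega>))\<^sup>2) \<partial>M)"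
      by (rule integral_eq_nn_integral[OF Zsqm[OF that]]) simp
    also have "\<dots> \<le> s2" using Zv[OF that] s2 by (simp add: enn2real_leI)
    finally show ?thesis .
  qed
  have cross: "integrable M (\<lambda>\<omega>. Z a \<omega> \<bullet> Z b \<omega>) \<and> (\<integral>\<omega>. Z a \<omega> \<bullet> Z b \<omega> \<partial>M) = 0"
    if ab: "a \<in> A" "b \<in> A" "a \<noteq> b" for a b
  proof -
    have tne: "\<tau> a \<noteq> \<tau> b" using inj ab by (auto dest: inj_onD)
    have comp: "integrable M (\<lambda>\<omega>. Z a \<omega> $ j * Z b \<omega> $ j) \<and> (\<integral>\<omega>. Z a \<omega> $ j * Z b \<omega> $ j \<partial>M) = 0" for j
    proof -
      have ma: "(\<lambda>s. d a s $ j) \<in> borel_measurable (MD (\<tau> a))" using dm[OF ab(1)] by (rule measurable_vec_nth)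
      have mb: "(\<lambda>s. d b s $ j) \<in> borel_measurable (MD (\<tau> b))" using dm[OF ab(2)] by (rule measurable_vec_nth)
      have I: "indep_var borel (\<lambda>\<omega>. Z a \<omega> $ j) borel (\<lambda>\<omega>. Z b \<omega> $ j)"
        using indep_pair_comp[OF tne ma mb] by (simp add: Z_def)
      have ia: "integrable M (\<lambda>\<omega>. Z a \<omega> $ j)" using integrable_bounded_linear[OF bounded_linear_vec_nth Zi[OF ab(1)]] .
      have ib: "integrable M (\<lambda>\<omega>. Z b \<omega> $ j)" using integrable_bounded_linear[OF bounded_linear_vec_nth Zi[OF ab(2)]] .
      have ea: "(\<integral>\<omega>. Z a \<omega> $ j \<partial>M) = 0"
        using integral_bounded_linear[OF bounded_linear_vec_nth Zi[OF ab(1)]] Z0[OF ab(1)] by simp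
      show ?thesis using indep_var_lebesgue_integral[OF I ia ib] indep_var_integrable[OF I ia ib] ea by simp
    qed
    have eq: "(\<lambda>\<omega>. Z a \<omega> \<bullet> Z b \<omega>) = (\<lambda>\<omega>. \<Sum>j\<in>UNIV. Z a \<omega> $ j * Z b \<omega> $ j)"
      by (simp add: inner_vec_def)
    show ?thesis unfolding eq using comp
      by (simp add: Bochner_Integration.integral_sum Bochner_Integration.integrable_sum)
  qed
  have diag: "(\<lambda>\<omega>. Z a \<omega> \<bullet> Z a \<omega>) = (\<lambda>\<omega>. (norm (Z a \<omega>))\<^sup>2)" for a
    by (simp add: power2_norm_eq_inner)
  have Iab: "integrable M (\<lambda>\<omega>. Z a \<omega> \<bullet> Z b \<omega>)" if "a \<in> A" "b \<in> A" for a b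
    using cross[of a b] Zsqi[of a] that diag[of a] by (cases "a = b") auto
  have Eab: "(\<integral>\<omega>. Z a \<omega> \<bullet> Z b \<omega> \<partial>M) = (if a = b then (\<integral>\<omega>. (norm (Z a \<omega>))\<^sup>2 \<partial>M) else 0)" if "a \<in> A" "b \<in> A" for a b
    using cross[of a b] that diag[of a] by (cases "a = b") auto
  have expand: "(norm (c + (\<Sum>a\<in>A. Z a \<omega>)))\<^sup>2 = c \<bullet> c + 2 * (\<Sum>a\<in>A. c \<bullet> Z a \<omega>) + (\<Sum>a\<in>A. \<Sum>b\<in>A. Z a \<omega> \<bullet> Z b \<omega>)" for \<omega>
    by (simp add: power2_norm_eq_inner inner_add_left inner_add_right inner_sum_left inner_sum_right inner_commute)
  have I1: "integrable M (\<lambda>\<omega>. c \<bullet> c + 2 * (\<Sum>a\<in>A. c \<bullet> Z a \<omega>) + (\<Sum>a\<in>A. \<Sum>b\<in>A. Z a \<omega> \<bullet> Z b \<omega>))"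
    using Zi Iab by (intro Bochner_Integration.integrable_add integrable_mult_right Bochner_Integration.integrable_sum integrable_const integrable_inner_right) auto
  have E1: "(\<integral>\<omega>. c \<bullet> c + 2 * (\<Sum>a\<in>A. c \<bullet> Z a \<omega>) + (\<Sum>a\<in>A. \<Sum>b\<in>A. Z a \<omega> \<bullet> Z b \<omega>) \<partial>M)
     = c \<bullet> c + (\<Sum>a\<in>A. (\<integral>\<omega>. (norm (Z a \<omega>))\<^sup>2 \<partial>M))"
  proof -
    have s1: "integrable M (\<lambda>\<omega>. 2 * (\<Sum>a\<in>A. c \<bullet> Z a \<omega>))" using Zi by auto
    have s2': "integrable M (\<lambda>\<omega>. \<Sum>a\<in>A. \<Sum>b\<in>A. Z a \<omega> \<bullet> Z b \<omega>)" using Iab by (auto intro!: Bochner_Integration.integrable_sum)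
    have "(\<integral>\<omega>. c \<bullet> c + 2 * (\<Sum>a\<in>A. c \<bullet> Z a \<omega>) + (\<Sum>a\<in>A. \<Sum>b\<in>A. Z a \<omega> \<bullet> Z b \<omega>) \<partial>M)
        = c \<bullet> c + 2 * (\<Sum>a\<in>A. (\<integral>\<omega>. c \<bullet> Z a \<omega> \<partial>M)) + (\<Sum>a\<in>A. \<Sum>b\<in>A. (\<integral>\<omega>. Z a \<omega> \<bullet> Z b \<omega> \<partial>M))"
      using s1 s2' Zi Iab
      by (simp add: Bochner_Integration.integral_add Bochner_Integration.integral_sum Bochner_Integration.integrable_sum prob_space)
    also have "(\<Sum>a\<in>A. (\<integral>\<omega>. c \<bullet> Z a \<omega> \<partial>M)) = 0" using Zi Z0 by simp
    also have "(\<Sum>a\<in>A. \<Sum>b\<in>A. (\<integral>\<omega>. Z a \<omega> \<bullet> Z b \<omega> \<partial>M)) = (\<Sum>a\<in>A. (\<integral>\<omega>. (norm (Z a \<omega>))\<^sup>2 \<partial>M))"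
      using A by (simp add: Eab cong: sum.cong)
    finally show ?thesis by simp
  qed
  have "(\<integral>\<^sup>+\<omega>. ennreal ((norm (c + (\<Sum>a\<in>A. Z a \<omega>)))\<^sup>2) \<partial>M)
      = ennreal (\<integral>\<omega>. (norm (c + (\<Sum>a\<in>A. Z a \<omega>)))\<^sup>2 \<partial>M)"
  proof (rule nn_integral_eq_integral)
    show "integrable M (\<lambda>\<omega>. (norm (c + (\<Sum>a\<in>A. Z a \<omega>)))\<^sup>2)" using I1 by (simp only: expand)
  qed simp
  also have "(\<integral>\<omega>. (norm (c + (\<Sum>a\<in>A. Z a \<omega>)))\<^sup>2 \<partial>M) = c \<bullet> c + (\<Sum>a\<in>A. (\<integral>\<omega>. (norm (Z a \<omega>))\<^sup>2 \<partial>M))"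
    using E1 expand by simp
  also have "\<dots> \<le> (norm c)\<^sup>2 + real (card A) * s2"
    using sum_mono[of A "\<lambda>a. (\<integral>\<omega>. (norm (Z a \<omega>))\<^sup>2 \<partial>M)" "\<lambda>_. s2"] Zsqv
    by (simp add: power2_norm_eq_inner)
  finally show ?thesis unfolding Z_def by (simp add: ennreal_leI)
qed

end


lemma quad_ineq:
  fixes a h :: "'v::real_inner"
  assumes L: "L > 0" and g: "\<gamma> > 0" and b: "b > 0" and gbL: "\<gamma> * b * L \<le> 1/4"
  shows "L * \<gamma>\<^sup>2 / 2 * (norm (b *\<^sub>R h - (1 / (L * \<gamma>)) *\<^sub>R a))\<^sup>2 - (norm a)\<^sup>2 / (2 * L) + \<gamma> * b / 2 * (norm a)\<^sup>2
         \<le> \<gamma> * b / 2 * (norm (a - h))\<^sup>2"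
proof -
  define p where "p = h \<bullet> h"
  define q where "q = h \<bullet> a"
  define r where "r = a \<bullet> a"
  have p: "p \<ge> 0" by (simp add: p_def)
  have e1: "(norm (b *\<^sub>R h - (1 / (L * \<gamma>)) *\<^sub>R a))\<^sup>2 = b\<^sup>2 * p - 2 * b / (L * \<gamma>) * q + r / (L * \<gamma>)\<^sup>2"
    unfolding power2_norm_eq_inner p_def q_def r_def
    by (simp add: inner_diff_left inner_diff_right inner_commute power2_eq_square algebra_simps)
  have e2: "(norm (a - h))\<^sup>2 = r - 2 * q + p"
    by (simp add: power2_norm_eq_inner inner_diff_left inner_diff_right p_def q_def r_def inner_commute)
  have e3: "(norm a)\<^sup>2 = r" by (simp add: power2_norm_eq_inner r_def)
  have "L * \<gamma>\<^sup>2 / 2 * (b\<^sup>2 * p - 2 * b / (L * \<gamma>) * q + r / (L * \<gamma>)\<^sup>2) - r / (2 * L) + \<gamma> * b / 2 * r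
      = \<gamma> * b / 2 * (r - 2 * q + p) - (\<gamma> * b / 2) * (1 - \<gamma> * b * L) * p"
    using L g by (simp add: field_simps power2_eq_square)
  also have "\<dots> \<le> \<gamma> * b / 2 * (r - 2 * q + p)"
    using gbL g b p by (simp add: mult_nonneg_nonneg)
  finally show ?thesis by (simp add: e1 e2 e3)
qed

lemma ennreal_step:
  assumes "I + ennreal q \<le> ennreal R" "q \<ge> 0" "R - q + r \<le> T" "r \<ge> 0" "R \<ge> 0"
  shows "I + ennreal r \<le> ennreal T"
proof -
  have "I \<noteq> \<infinity>" using assms(1) by (auto simp: top_unique)
  then obtain i where i: "I = ennreal i" "i \<ge> 0" by (cases I) auto
  then have "ennreal (i + q) \<le> ennreal R" using assms by (simp add: ennreal_plus)
  then have "i + q \<le> R" using assms i by (subst (asm) ennreal_le_iff) (auto intro: order_trans[OF _ assms(1)])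
  then have "i + r \<le> T" using assms by linarith
  then have "ennreal (i + r) \<le> ennreal T" by (rule ennreal_leI)
  then show ?thesis using i assms(4) by simp
qed

context flex begin

definition "Phi v = favg fi v - fstar fi"
definition "Ssum k X r = (\<Sum>j<\<beta>. (1 / real CARD('n)) *\<^sub>R (\<Sum>i\<in>UNIV. g i (X $ i) (r (\<beta> * k + j, i))))"
definition "Fk k = (\<lambda>(X, r). ennreal (Phi (xbar X - \<gamma> *\<^sub>R Ssum k X r)) + ennreal (\<gamma> * \<beta> / 2 * (norm (gavg gfi (xbar X)))\<^sup>2))"

lemma Phi_nonneg: "Phi v \<ge> 0"
  using cINF_lower[OF f_bdd, of v] by (simp add: Phi_def fstar_def)

lemma favg_cont: "continuous_on UNIV (favg fi)"
  by (intro continuous_at_imp_continuous_on ballI has_derivative_continuous[OF favg_deriv[OF f_grad]])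

lemma gavg_cont: "continuous_on UNIV (gavg gfi)"
proof -
  have "lipschitz_on L UNIV (gavg gfi)"
    unfolding lipschitz_on_def using L_pos gavg_lip[OF f_lip] by (auto simp: dist_norm)
  then show ?thesis by (rule lipschitz_on_continuous_on)
qed

lemma descent_favg: "favg fi (u + e) \<le> favg fi u + gavg gfi u \<bullet> e + L/2 * (norm e)\<^sup>2"
  by (rule descent_lemma[OF favg_deriv[OF f_grad] gavg_lip[OF f_lip]])

lemma pointwise_descent:
  fixes S :: "real^'p"
  shows "Phi (u - \<gamma> *\<^sub>R S) + (norm (gavg gfi u))\<^sup>2 / (2 * L)
     \<le> Phi u + L * \<gamma>\<^sup>2 / 2 * (norm (S - (1 / (L * \<gamma>)) *\<^sub>R gavg gfi u))\<^sup>2"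
proof -
  define a where "a = gavg gfi u"
  have d: "favg fi (u + (- \<gamma> *\<^sub>R S)) \<le> favg fi u + a \<bullet> (- \<gamma> *\<^sub>R S) + L/2 * (norm (- \<gamma> *\<^sub>R S))\<^sup>2"
    unfolding a_def by (rule descent_favg)
  have e: "L * \<gamma>\<^sup>2 / 2 * (norm (S - (1 / (L * \<gamma>)) *\<^sub>R a))\<^sup>2
      = L/2 * (norm (- \<gamma> *\<^sub>R S))\<^sup>2 + a \<bullet> (- \<gamma> *\<^sub>R S) + (norm a)\<^sup>2 / (2 * L)"
    using L_pos \<gamma>_pos unfolding power2_norm_eq_inner
    by (simp add: inner_diff_left inner_diff_right inner_commute field_simps power2_eq_square)
  show ?thesis using d e by (simp add: Phi_def a_def algebra_simps)
qed

lemma RR_eval: "j < \<beta> \<Longrightarrow> RR k \<omega> (\<beta> * k + j, i) = \<xi> (\<beta> * k + j) i \<omega>"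
  by (simp add: RR_def Blk_def Xi_def)

lemma xbar_next: "xbar (x (\<beta> * (k + 1)) \<omega>) = xbar (x (\<beta> * k) \<omega>) - \<gamma> *\<^sub>R Ssum k (x (\<beta> * k) \<omega>) (RR k \<omega>)"
proof -
  have "(\<Sum>j<\<beta>. xbar (G (\<beta> * k + j) \<omega>)) = Ssum k (x (\<beta> * k) \<omega>) (RR k \<omega>)"
    unfolding Ssum_def by (rule sum.cong) (auto simp: G_round RR_eval xbar_def)
  then show ?thesis using xbar_step[of k \<omega>] by simp
qed

end


lemma xbar_meas[measurable]:
  fixes f :: "'a \<Rightarrow> real^'p::finite^'n::finite"
  assumes "f \<in> borel_measurable N"
  shows "(\<lambda>\<omega>. xbar (f \<omega>)) \<in> borel_measurable N"
  unfolding xbar_def by (intro borel_measurable_scaleR borel_measurable_const borel_measurable_sum measurable_vec_nth assms)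

lemma vec_nth_borel[measurable]: "(\<lambda>x::'b::euclidean_space^'i::finite. x $ i) \<in> borel_measurable borel"
  by (rule borel_measurable_continuous_onI) (intro continuous_intros)

context flex begin

lemma Phi_meas: "f \<in> borel_measurable N \<Longrightarrow> (\<lambda>\<omega>. Phi (f \<omega>)) \<in> borel_measurable N"
  unfolding Phi_def by (intro borel_measurable_diff borel_measurable_const borel_measurable_continuous_on[OF favg_cont])

lemma gavg_meas: "f \<in> borel_measurable N \<Longrightarrow> (\<lambda>\<omega>. gavg gfi (f \<omega>)) \<in> borel_measurable N"
  by (rule borel_measurable_continuous_on[OF gavg_cont])

lemma Ssum_meas: "(\<lambda>p. Ssum k (fst p) (snd p)) \<in> borel_measurable (borel \<Otimes>\<^sub>M PiM (Blk k) MD)"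
  unfolding Ssum_def
proof (intro borel_measurable_sum borel_measurable_scaleR borel_measurable_const)
  fix j i assume "j \<in> {..<\<beta>}"
  then have mem: "(\<beta> * k + j, i) \<in> Blk k" by (auto simp: Blk_def)
  have "(\<lambda>p. snd p (\<beta> * k + j, i)) \<in> measurable (borel \<Otimes>\<^sub>M PiM (Blk k) MD) (MD (\<beta> * k + j, i))"
    by (rule measurable_compose[OF measurable_snd measurable_component_singleton[OF mem]])
  then have m2: "(\<lambda>p. snd p (\<beta> * k + j, i)) \<in> measurable (borel \<Otimes>\<^sub>M PiM (Blk k) MD) (D i)"
    by (simp add: MD_def)
  have m1: "(\<lambda>p. (fst p :: real^'p^'n) $ i) \<in> borel_measurable (borel \<Otimes>\<^sub>M PiM (Blk k) MD)"
    by measurable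
  show "(\<lambda>p. g i (fst p $ i) (snd p (\<beta> * k + j, i))) \<in> borel_measurable (borel \<Otimes>\<^sub>M PiM (Blk k) MD)"
    by (rule g_comp_meas[OF m1 m2])
qed

lemma Fk_meas: "Fk k \<in> borel_measurable (borel \<Otimes>\<^sub>M PiM (Blk k) MD)"
proof -
  have "(\<lambda>p. ennreal (Phi (xbar (fst p) - \<gamma> *\<^sub>R Ssum k (fst p) (snd p))) + ennreal (\<gamma> * \<beta> / 2 * (norm (gavg gfi (xbar (fst p))))\<^sup>2))
     \<in> borel_measurable (borel \<Otimes>\<^sub>M PiM (Blk k) MD)"
  proof -
    have m_u: "(\<lambda>p. xbar (fst p)) \<in> borel_measurable (borel \<Otimes>\<^sub>M PiM (Blk k) MD)"
      by (rule xbar_meas[OF measurable_fst])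
    have m_g: "(\<lambda>p. gavg gfi (xbar (fst p))) \<in> borel_measurable (borel \<Otimes>\<^sub>M PiM (Blk k) MD)"
      by (rule gavg_meas[OF m_u])
    have m_a: "(\<lambda>p. \<gamma> * \<beta> / 2 * (norm (gavg gfi (xbar (fst p))))\<^sup>2) \<in> borel_measurable (borel \<Otimes>\<^sub>M PiM (Blk k) MD)"
      using m_g by measurable
    have m_p: "(\<lambda>p. Phi (xbar (fst p) - \<gamma> *\<^sub>R Ssum k (fst p) (snd p))) \<in> borel_measurable (borel \<Otimes>\<^sub>M PiM (Blk k) MD)"
      by (intro Phi_meas borel_measurable_diff m_u borel_measurable_scaleR borel_measurable_const Ssum_meas)
    show ?thesis using m_a m_p by measurable
  qed
  moreover have "Fk k = (\<lambda>p. ennreal (Phi (xbar (fst p) - \<gamma> *\<^sub>R Ssum k (fst p) (snd p))) + ennreal (\<gamma> * \<beta> / 2 * (norm (gavg gfi (xbar (fst p))))\<^sup>2))"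
    by (auto simp: Fk_def)
  ultimately show ?thesis by simp
qed

end


context flex begin

lemma D_prob: "prob_space (D i)"
  using prob_space.prob_space_distr[OF M \<xi>_meas[of 0 i]] by (simp add: \<xi>_distr)

lemma g_meas1: "g i v \<in> borel_measurable (D i)"
  using g_comp_meas[of "\<lambda>s. v" "D i" "\<lambda>s. s" i] by simp

lemma inner_bound:
  fixes X :: "real^'p^'n"
  shows "(\<integral>\<^sup>+\<omega>'. Fk k (X, RR k \<omega>') \<partial>M) \<le> ennreal (Phi (xbar X) + \<gamma> * \<beta> * L\<^sup>2 / (2 * real CARD('n)) * (norm (xtilde X))\<^sup>2
          + L * \<gamma>\<^sup>2 * \<beta> * \<sigma>\<^sup>2 / (2 * real CARD('n)))"
proof -
  interpret prob_space M by (rule M)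
  define n where "n = real CARD('n)"
  have n: "n > 0" by (simp add: n_def)
  define u where "u = xbar X"
  define a where "a = gavg gfi u"
  define h where "h = (1 / n) *\<^sub>R (\<Sum>i\<in>UNIV. gfi i (X $ i))"
  define c where "c = (1 / (L * \<gamma>)) *\<^sub>R a"
  define S where "S \<omega>' = Ssum k X (RR k \<omega>')" for \<omega>'
  define A where "A = {..<\<beta>} \<times> (UNIV::'n set)"
  define \<tau> where "\<tau> = (\<lambda>(j::nat, i::'n). (\<beta> * k + j, i))"
  define dd where "dd = (\<lambda>(j::nat, i::'n) s. (1 / n) *\<^sub>R (g i (X $ i) s - gfi i (X $ i)))"
  have S_eq: "S \<omega>' = (\<Sum>j<\<beta>. (1 / n) *\<^sub>R (\<Sum>i\<in>UNIV. g i (X $ i) (\<xi> (\<beta> * k + j) i \<omega>')))" for \<omega>'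
    unfolding S_def Ssum_def n_def by (rule sum.cong) (auto simp: RR_eval)
  have decomp: "S \<omega>' - c = (real \<beta> *\<^sub>R h - c) + (\<Sum>p\<in>A. dd p (Xi (\<tau> p) \<omega>'))" for \<omega>'
  proof -
    have "(\<Sum>p\<in>A. dd p (Xi (\<tau> p) \<omega>')) = (\<Sum>(j,i)\<in>A. (1 / n) *\<^sub>R (g i (X $ i) (\<xi> (\<beta> * k + j) i \<omega>') - gfi i (X $ i)))"
      by (rule sum.cong) (auto simp: dd_def \<tau>_def Xi_def)
    also have "\<dots> = (\<Sum>j<\<beta>. \<Sum>i\<in>UNIV. (1 / n) *\<^sub>R (g i (X $ i) (\<xi> (\<beta> * k + j) i \<omega>') - gfi i (X $ i)))"
      unfolding A_def by (rule sum.cartesian_product[symmetric])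
    also have "\<dots> = (\<Sum>j<\<beta>. (1 / n) *\<^sub>R (\<Sum>i\<in>UNIV. g i (X $ i) (\<xi> (\<beta> * k + j) i \<omega>')) - h)"
      by (simp add: h_def scaleR_sum_right[symmetric] sum_subtractf scaleR_diff_right)
    also have "\<dots> = S \<omega>' - real \<beta> *\<^sub>R h"
      by (simp add: S_eq sum_subtractf sum_constant_scaleR del: sum_constant)
    finally show ?thesis by simp
  qed
  have cardA: "real (card A) = real \<beta> * n" by (simp add: A_def n_def card_cartesian_product)
  have var: "(\<integral>\<^sup>+\<omega>'. ennreal ((norm (S \<omega>' - c))\<^sup>2) \<partial>M) \<le> ennreal ((norm (real \<beta> *\<^sub>R h - c))\<^sup>2 + real \<beta> * \<sigma>\<^sup>2 / n)"
  proof -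
    have vb: "(\<integral>\<^sup>+\<omega>'. ennreal ((norm ((real \<beta> *\<^sub>R h - c) + (\<Sum>p\<in>A. dd p (Xi (\<tau> p) \<omega>'))))\<^sup>2) \<partial>M)
          \<le> ennreal ((norm (real \<beta> *\<^sub>R h - c))\<^sup>2 + real (card A) * (\<sigma>\<^sup>2 / n\<^sup>2))"
    proof (rule var_bound)
      show "finite A" by (simp add: A_def)
      show "inj_on \<tau> A" by (auto simp: inj_on_def \<tau>_def A_def)
      show "0 \<le> \<sigma>\<^sup>2 / n\<^sup>2" by simp
      fix p assume "p \<in> A"
      obtain j i where p: "p = (j, i)" by (cases p)
      have MDt: "MD (\<tau> p) = D i" by (simp add: p \<tau>_def MD_def)
      interpret Di: prob_space "D i" by (rule D_prob)
      have gi: "integrable (D i) (g i (X $ i))" using g_unbiased by simp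
      show "dd p \<in> borel_measurable (MD (\<tau> p))"
        unfolding MDt using g_meas1[of i "X $ i"] by (simp add: p dd_def)
      show "integrable (MD (\<tau> p)) (dd p)"
        unfolding MDt using gi by (simp add: p dd_def)
      show "(\<integral>s. dd p s \<partial>MD (\<tau> p)) = 0"
        unfolding MDt using gi g_unbiased[of i "X $ i"] by (simp add: p dd_def Bochner_Integration.integral_diff Di.prob_space)
      have "(\<integral>\<^sup>+s. ennreal ((norm (dd p s))\<^sup>2) \<partial>D i) = (\<integral>\<^sup>+s. ennreal (1 / n\<^sup>2) * ennreal ((norm (g i (X $ i) s - gfi i (X $ i)))\<^sup>2) \<partial>D i)"
        using n by (intro nn_integral_cong) (simp add: p dd_def ennreal_mult[symmetric] power_mult_distrib power_divide)
      also have "\<dots> = ennreal (1 / n\<^sup>2) * (\<integral>\<^sup>+s. ennreal ((norm (g i (X $ i) s - gfi i (X $ i)))\<^sup>2) \<partial>D i)"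
        by (rule nn_integral_cmult) (use g_meas1 in measurable)
      also have "\<dots> \<le> ennreal (1 / n\<^sup>2) * ennreal (\<sigma>\<^sup>2)" by (intro mult_left_mono g_var) simp
      also have "\<dots> = ennreal (\<sigma>\<^sup>2 / n\<^sup>2)" by (simp add: ennreal_mult[symmetric])
      finally show "(\<integral>\<^sup>+s. ennreal ((norm (dd p s))\<^sup>2) \<partial>MD (\<tau> p)) \<le> ennreal (\<sigma>\<^sup>2 / n\<^sup>2)" by (simp add: MDt)
    qed
    have ce: "real (card A) * (\<sigma>\<^sup>2 / n\<^sup>2) = real \<beta> * \<sigma>\<^sup>2 / n"
      using n by (simp add: cardA power2_eq_square field_simps)
    show ?thesis unfolding decomp using vb unfolding ce .
  qed
  have Sm: "S \<in> borel_measurable M"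
  proof -
    have "(\<lambda>\<omega>'. (X, RR k \<omega>')) \<in> measurable M (borel \<Otimes>\<^sub>M PiM (Blk k) MD)"
      by (intro measurable_Pair measurable_const RR_meas) simp
    from measurable_compose[OF this Ssum_meas] show ?thesis by (simp add: S_def[abs_def])
  qed
  define q where "q = (norm a)\<^sup>2 / (2 * L)"
  define r where "r = \<gamma> * \<beta> / 2 * (norm a)\<^sup>2"
  define V where "V = (norm (real \<beta> *\<^sub>R h - c))\<^sup>2 + real \<beta> * \<sigma>\<^sup>2 / n"
  define R where "R = Phi u + L * \<gamma>\<^sup>2 / 2 * V"
  define T where "T = Phi (xbar X) + \<gamma> * \<beta> * L\<^sup>2 / (2 * real CARD('n)) * (norm (xtilde X))\<^sup>2
          + L * \<gamma>\<^sup>2 * \<beta> * \<sigma>\<^sup>2 / (2 * real CARD('n))"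
  have V_nonneg: "V \<ge> 0" using n by (simp add: V_def)
  have q_nonneg: "q \<ge> 0" using L_pos by (simp add: q_def)
  have r_nonneg: "r \<ge> 0" using \<gamma>_pos by (simp add: r_def)
  have R_nonneg: "R \<ge> 0" using Phi_nonneg[of u] V_nonneg L_pos by (simp add: R_def)
  have Fk_eq: "Fk k (X, RR k \<omega>') = ennreal (Phi (u - \<gamma> *\<^sub>R S \<omega>')) + ennreal r" for \<omega>'
    by (simp add: Fk_def S_def u_def a_def r_def)
  have pw: "ennreal (Phi (u - \<gamma> *\<^sub>R S \<omega>')) + ennreal q \<le> ennreal (Phi u) + ennreal (L * \<gamma>\<^sup>2 / 2) * ennreal ((norm (S \<omega>' - c))\<^sup>2)" for \<omega>'
  proof -
    have "Phi (u - \<gamma> *\<^sub>R S \<omega>') + q \<le> Phi u + L * \<gamma>\<^sup>2 / 2 * (norm (S \<omega>' - c))\<^sup>2"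
      using pointwise_descent[of u "S \<omega>'"] by (simp add: q_def c_def a_def)
    then have le: "ennreal (Phi (u - \<gamma> *\<^sub>R S \<omega>') + q) \<le> ennreal (Phi u + L * \<gamma>\<^sup>2 / 2 * (norm (S \<omega>' - c))\<^sup>2)"
      by (rule ennreal_leI)
    have e1: "ennreal (Phi (u - \<gamma> *\<^sub>R S \<omega>')) + ennreal q = ennreal (Phi (u - \<gamma> *\<^sub>R S \<omega>') + q)"
      using Phi_nonneg[of "u - \<gamma> *\<^sub>R S \<omega>'"] q_nonneg by (rule ennreal_plus[symmetric])
    have e3: "ennreal (L * \<gamma>\<^sup>2 / 2) * ennreal ((norm (S \<omega>' - c))\<^sup>2) = ennreal (L * \<gamma>\<^sup>2 / 2 * (norm (S \<omega>' - c))\<^sup>2)"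
      using L_pos by (intro ennreal_mult[symmetric]) auto
    have e2: "ennreal (Phi u) + ennreal (L * \<gamma>\<^sup>2 / 2 * (norm (S \<omega>' - c))\<^sup>2) = ennreal (Phi u + L * \<gamma>\<^sup>2 / 2 * (norm (S \<omega>' - c))\<^sup>2)"
      using Phi_nonneg[of u] L_pos by (intro ennreal_plus[symmetric]) auto
    show ?thesis unfolding e1 e3 e2 by (rule le)
  qed
  have Im0: "(\<lambda>\<omega>'. Phi (u - \<gamma> *\<^sub>R S \<omega>')) \<in> borel_measurable M"
    by (intro Phi_meas borel_measurable_diff borel_measurable_const borel_measurable_scaleR Sm)
  have Im: "(\<lambda>\<omega>'. ennreal (Phi (u - \<gamma> *\<^sub>R S \<omega>'))) \<in> borel_measurable M" using Im0 by measurable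
  have Vm: "(\<lambda>\<omega>'. ennreal ((norm (S \<omega>' - c))\<^sup>2)) \<in> borel_measurable M" using Sm by measurable
  have step1: "(\<integral>\<^sup>+\<omega>'. ennreal (Phi (u - \<gamma> *\<^sub>R S \<omega>')) \<partial>M) + ennreal q \<le> ennreal R"
  proof -
    have "(\<integral>\<^sup>+\<omega>'. ennreal (Phi (u - \<gamma> *\<^sub>R S \<omega>')) \<partial>M) + ennreal q
        = (\<integral>\<^sup>+\<omega>'. (ennreal (Phi (u - \<gamma> *\<^sub>R S \<omega>')) + ennreal q) \<partial>M)"
      using Im by (simp add: nn_integral_add emeasure_space_1)
    also have "\<dots> \<le> (\<integral>\<^sup>+\<omega>'. (ennreal (Phi u) + ennreal (L * \<gamma>\<^sup>2 / 2) * ennreal ((norm (S \<omega>' - c))\<^sup>2)) \<partial>M)"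
      by (rule nn_integral_mono) (rule pw)
    also have "\<dots> = ennreal (Phi u) + ennreal (L * \<gamma>\<^sup>2 / 2) * (\<integral>\<^sup>+\<omega>'. ennreal ((norm (S \<omega>' - c))\<^sup>2) \<partial>M)"
      using Vm by (simp add: nn_integral_add nn_integral_cmult emeasure_space_1)
    also have "\<dots> \<le> ennreal (Phi u) + ennreal (L * \<gamma>\<^sup>2 / 2) * ennreal V"
      using var by (intro add_left_mono mult_left_mono) (simp_all add: V_def)
    also have "\<dots> = ennreal R"
    proof -
      have "ennreal (L * \<gamma>\<^sup>2 / 2) * ennreal V = ennreal (L * \<gamma>\<^sup>2 / 2 * V)"
        using L_pos V_nonneg by (intro ennreal_mult[symmetric]) auto
      moreover have "ennreal (Phi u) + ennreal (L * \<gamma>\<^sup>2 / 2 * V) = ennreal R"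
        unfolding R_def using Phi_nonneg[of u] L_pos V_nonneg by (intro ennreal_plus[symmetric]) auto
      ultimately show ?thesis by simp
    qed
    finally show ?thesis .
  qed
  have key: "R - q + r \<le> T"
  proof -
    have qi: "L * \<gamma>\<^sup>2 / 2 * (norm (real \<beta> *\<^sub>R h - c))\<^sup>2 - q + r \<le> \<gamma> * real \<beta> / 2 * (norm (a - h))\<^sup>2"
      using quad_ineq[OF L_pos \<gamma>_pos _ \<gamma>\<beta>L, of h a] \<beta> by (simp add: c_def q_def r_def)
    have ge: "(norm (a - h))\<^sup>2 \<le> L\<^sup>2 / n * (norm (xtilde X))\<^sup>2"
      using grad_err[OF f_lip, where X=X] by (simp add: a_def u_def h_def n_def)
    have "\<gamma> * real \<beta> / 2 * (norm (a - h))\<^sup>2 \<le> \<gamma> * real \<beta> / 2 * (L\<^sup>2 / n * (norm (xtilde X))\<^sup>2)"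
      using ge \<gamma>_pos by (intro mult_left_mono) auto
    also have "\<dots> = \<gamma> * \<beta> * L\<^sup>2 / (2 * real CARD('n)) * (norm (xtilde X))\<^sup>2" by (simp add: n_def)
    finally have "L * \<gamma>\<^sup>2 / 2 * (norm (real \<beta> *\<^sub>R h - c))\<^sup>2 - q + r \<le> \<gamma> * \<beta> * L\<^sup>2 / (2 * real CARD('n)) * (norm (xtilde X))\<^sup>2"
      using qi by linarith
    moreover have "L * \<gamma>\<^sup>2 / 2 * (real \<beta> * \<sigma>\<^sup>2 / n) = L * \<gamma>\<^sup>2 * \<beta> * \<sigma>\<^sup>2 / (2 * real CARD('n))"
      by (simp add: n_def)
    ultimately show ?thesis by (simp add: R_def T_def V_def u_def n_def algebra_simps)
  qed
  have "(\<integral>\<^sup>+\<omega>'. Fk k (X, RR k \<omega>') \<partial>M) = (\<integral>\<^sup>+\<omega>'. ennreal (Phi (u - \<gamma> *\<^sub>R S \<omega>')) \<partial>M) + ennreal r"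
    using Im by (simp add: Fk_eq nn_integral_add emeasure_space_1)
  also have "\<dots> \<le> ennreal T" by (rule ennreal_step[OF step1 q_nonneg key r_nonneg R_nonneg])
  finally show ?thesis by (simp add: T_def)
qed

end


lemma xtilde_meas:
  fixes f :: "'a \<Rightarrow> real^'p::finite^'n::finite"
  assumes "f \<in> borel_measurable N"
  shows "(\<lambda>\<omega>. xtilde (f \<omega>)) \<in> borel_measurable N"
  unfolding xtilde_def
  by (intro measurable_vec_lambda borel_measurable_diff measurable_vec_nth xbar_meas assms)

context flex begin

definition "Aa k = (\<integral>\<^sup>+\<omega>. ennreal (Phi (xbar (x (\<beta> * k) \<omega>))) \<partial>M)"
definition "Bb k = (\<integral>\<^sup>+\<omega>. ennreal (\<gamma> * \<beta> / 2 * (norm (gavg gfi (xbar (x (\<beta> * k) \<omega>))))\<^sup>2) \<partial>M)"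
definition "Cc k = (\<integral>\<^sup>+\<omega>. ennreal (\<gamma> * \<beta> * L\<^sup>2 / (2 * real CARD('n)) * (norm (xtilde (x (\<beta> * k) \<omega>)))\<^sup>2) \<partial>M)"
definition "c0 = L * \<gamma>\<^sup>2 * \<beta> * \<sigma>\<^sup>2 / (2 * real CARD('n))"

lemma one_step: "Aa (Suc k) + Bb k \<le> Aa k + Cc k + ennreal c0"
proof -
  interpret prob_space M by (rule M)
  have xm: "x (\<beta> * k) \<in> borel_measurable M" by (rule x_meas)
  have xm1: "x (\<beta> * Suc k) \<in> borel_measurable M" by (rule x_meas)
  have m1: "(\<lambda>\<omega>. ennreal (Phi (xbar (x (\<beta> * Suc k) \<omega>)))) \<in> borel_measurable M"
    using Phi_meas[OF xbar_meas[OF xm1]] by measurable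
  have m2: "(\<lambda>\<omega>. ennreal (\<gamma> * \<beta> / 2 * (norm (gavg gfi (xbar (x (\<beta> * k) \<omega>))))\<^sup>2)) \<in> borel_measurable M"
    using gavg_meas[OF xbar_meas[OF xm]] by measurable
  have m3: "(\<lambda>\<omega>. ennreal (Phi (xbar (x (\<beta> * k) \<omega>)))) \<in> borel_measurable M"
    using Phi_meas[OF xbar_meas[OF xm]] by measurable
  have m4: "(\<lambda>\<omega>. ennreal (\<gamma> * \<beta> * L\<^sup>2 / (2 * real CARD('n)) * (norm (xtilde (x (\<beta> * k) \<omega>)))\<^sup>2)) \<in> borel_measurable M"
    using xtilde_meas[OF xm] by measurable
  have eqF: "Fk k (x (\<beta> * k) \<omega>, RR k \<omega>) = ennreal (Phi (xbar (x (\<beta> * Suc k) \<omega>)))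
      + ennreal (\<gamma> * \<beta> / 2 * (norm (gavg gfi (xbar (x (\<beta> * k) \<omega>))))\<^sup>2)" for \<omega>
    using xbar_next[of k \<omega>] by (simp add: Fk_def)
  have "Aa (Suc k) + Bb k = (\<integral>\<^sup>+\<omega>. Fk k (x (\<beta> * k) \<omega>, RR k \<omega>) \<partial>M)"
    unfolding Aa_def Bb_def eqF by (rule nn_integral_add[symmetric, OF m1 m2])
  also have "\<dots> = (\<integral>\<^sup>+\<omega>. (\<integral>\<^sup>+\<omega>'. Fk k (x (\<beta> * k) \<omega>, RR k \<omega>') \<partial>M) \<partial>M)"
    by (rule round_tonelli[OF Fk_meas])
  also have "\<dots> \<le> (\<integral>\<^sup>+\<omega>. ennreal (Phi (xbar (x (\<beta> * k) \<omega>)) + \<gamma> * \<beta> * L\<^sup>2 / (2 * real CARD('n)) * (norm (xtilde (x (\<beta> * k) \<omega>)))\<^sup>2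
          + c0) \<partial>M)"
    unfolding c0_def by (rule nn_integral_mono) (rule inner_bound)
  also have "\<dots> = (\<integral>\<^sup>+\<omega>. (ennreal (Phi (xbar (x (\<beta> * k) \<omega>))) + ennreal (\<gamma> * \<beta> * L\<^sup>2 / (2 * real CARD('n)) * (norm (xtilde (x (\<beta> * k) \<omega>)))\<^sup>2))
          + ennreal c0 \<partial>M)"
  proof (rule nn_integral_cong)
    fix \<omega>
    have nn: "0 \<le> Phi (xbar (x (\<beta> * k) \<omega>))" "0 \<le> \<gamma> * \<beta> * L\<^sup>2 / (2 * real CARD('n)) * (norm (xtilde (x (\<beta> * k) \<omega>)))\<^sup>2" "0 \<le> c0"
      using Phi_nonneg \<gamma>_pos L_pos by (auto simp: c0_def)
    show "ennreal (Phi (xbar (x (\<beta> * k) \<omega>)) + \<gamma> * \<beta> * L\<^sup>2 / (2 * real CARD('n)) * (norm (xtilde (x (\<beta> * k) \<omega>)))\<^sup>2 + c0)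
        = (ennreal (Phi (xbar (x (\<beta> * k) \<omega>))) + ennreal (\<gamma> * \<beta> * L\<^sup>2 / (2 * real CARD('n)) * (norm (xtilde (x (\<beta> * k) \<omega>)))\<^sup>2)) + ennreal c0"
      using nn by (simp add: ennreal_plus[symmetric] del: ennreal_plus)
  qed
  also have "\<dots> = Aa k + Cc k + ennreal c0"
    unfolding Aa_def Cc_def using m3 m4 by (simp add: nn_integral_add emeasure_space_1)
  finally show ?thesis .
qed

lemma sum_steps: "Aa K + (\<Sum>k<K. Bb k) \<le> Aa 0 + (\<Sum>k<K. Cc k) + ennreal (real K * c0)"
proof (induction K)
  case 0 then show ?case by simp
next
  case (Suc K)
  have c0: "c0 \<ge> 0" using \<gamma>_pos L_pos by (simp add: c0_def)
  have "Aa (Suc K) + (\<Sum>k<Suc K. Bb k) = (Aa (Suc K) + Bb K) + (\<Sum>k<K. Bb k)" by (simp add: add_ac)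
  also have "\<dots> \<le> (Aa K + Cc K + ennreal c0) + (\<Sum>k<K. Bb k)" by (intro add_right_mono one_step)
  also have "\<dots> = (Aa K + (\<Sum>k<K. Bb k)) + Cc K + ennreal c0" by (simp add: add_ac)
  also have "\<dots> \<le> (Aa 0 + (\<Sum>k<K. Cc k) + ennreal (real K * c0)) + Cc K + ennreal c0"
    by (intro add_right_mono Suc.IH)
  also have "\<dots> = Aa 0 + (\<Sum>k<Suc K. Cc k) + ennreal (real (Suc K) * c0)"
    using c0 by (simp add: add_ac distrib_right ennreal_plus[symmetric] del: ennreal_plus)
  finally show ?case .
qed

end


definition M2 :: "'a measure \<Rightarrow> ('a \<Rightarrow> 'v::real_normed_vector) \<Rightarrow> ennreal" where
  "M2 M V = (\<integral>\<^sup>+\<omega>. ennreal ((norm (V \<omega>))\<^sup>2) \<partial>M)"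

definition fin2 :: "'a measure \<Rightarrow> ('a \<Rightarrow> 'v::{real_normed_vector, second_countable_topology}) \<Rightarrow> bool" where
  "fin2 M V \<longleftrightarrow> V \<in> borel_measurable M \<and> M2 M V < \<infinity>"

lemma sq_add_le: "(norm (u + v))\<^sup>2 \<le> 2 * (norm u)\<^sup>2 + 2 * (norm (v::'v::real_normed_vector))\<^sup>2"
proof -
  have "(norm (u + v))\<^sup>2 \<le> (norm u + norm v)\<^sup>2" by (intro power_mono norm_triangle_ineq) simp
  also have "\<dots> \<le> 2 * (norm u)\<^sup>2 + 2 * (norm v)\<^sup>2"
  proof -
    have h: "0 \<le> (norm u - norm v)\<^sup>2" by simp
    then show ?thesis unfolding power2_sum power2_diff by linarith
  qed
  finally show ?thesis .
qed

lemma fin2_mono: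
  assumes "fin2 M V" "W \<in> borel_measurable M" "\<And>\<omega>. \<omega> \<in> space M \<Longrightarrow> (norm (W \<omega>))\<^sup>2 \<le> c * (norm (V \<omega>))\<^sup>2" "c \<ge> 0"
  shows "fin2 M W"
proof -
  have Vm0: "V \<in> borel_measurable M" using assms(1) by (simp add: fin2_def)
  have Vm: "(\<lambda>\<omega>. ennreal ((norm (V \<omega>))\<^sup>2)) \<in> borel_measurable M" using Vm0 by measurable
  have "M2 M W \<le> (\<integral>\<^sup>+\<omega>. ennreal c * ennreal ((norm (V \<omega>))\<^sup>2) \<partial>M)"
    unfolding M2_def using assms(3,4) by (intro nn_integral_mono) (simp add: ennreal_mult[symmetric] ennreal_leI)
  also have "\<dots> = ennreal c * M2 M V" unfolding M2_def by (rule nn_integral_cmult[OF Vm])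
  also have "\<dots> < \<infinity>" using assms(1) by (simp add: fin2_def ennreal_mult_less_top)
  finally show ?thesis using assms(2) by (simp add: fin2_def)
qed

lemma fin2_add:
  assumes "fin2 M U" "fin2 M V"
  shows "fin2 M (\<lambda>\<omega>. U \<omega> + V \<omega>)"
proof -
  have Um0: "U \<in> borel_measurable M" using assms(1) by (simp add: fin2_def)
  have Um: "(\<lambda>\<omega>. ennreal ((norm (U \<omega>))\<^sup>2)) \<in> borel_measurable M" using Um0 by measurable
  have Vm0: "V \<in> borel_measurable M" using assms(2) by (simp add: fin2_def)
  have Vm: "(\<lambda>\<omega>. ennreal ((norm (V \<omega>))\<^sup>2)) \<in> borel_measurable M" using Vm0 by measurable
  have pw: "ennreal ((norm (U \<omega> + V \<omega>))\<^sup>2) \<le> ennreal 2 * ennreal ((norm (U \<omega>))\<^sup>2) + ennreal 2 * ennreal ((norm (V \<omega>))\<^sup>2)" for \<omega>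
  proof -
    have "ennreal ((norm (U \<omega> + V \<omega>))\<^sup>2) \<le> ennreal (2 * (norm (U \<omega>))\<^sup>2 + 2 * (norm (V \<omega>))\<^sup>2)"
      by (rule ennreal_leI) (rule sq_add_le)
    also have "\<dots> = ennreal 2 * ennreal ((norm (U \<omega>))\<^sup>2) + ennreal 2 * ennreal ((norm (V \<omega>))\<^sup>2)"
      by (simp add: ennreal_plus ennreal_mult del: ennreal_numeral)
    finally show ?thesis .
  qed
  have "M2 M (\<lambda>\<omega>. U \<omega> + V \<omega>) \<le> (\<integral>\<^sup>+\<omega>. ennreal 2 * ennreal ((norm (U \<omega>))\<^sup>2) + ennreal 2 * ennreal ((norm (V \<omega>))\<^sup>2) \<partial>M)"
    unfolding M2_def by (intro nn_integral_mono pw)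
  also have "\<dots> = ennreal 2 * M2 M U + ennreal 2 * M2 M V"
    unfolding M2_def using Um Vm by (simp add: nn_integral_add nn_integral_cmult)
  also have "\<dots> < \<infinity>" using assms by (simp add: fin2_def ennreal_mult_less_top)
  finally show ?thesis using Um0 Vm0 by (simp add: fin2_def)
qed

lemma fin2_scaleR: "fin2 M V \<Longrightarrow> fin2 M (\<lambda>\<omega>. c *\<^sub>R V \<omega>)"
  by (rule fin2_mono[where c = "c\<^sup>2"]) (auto simp: fin2_def power_mult_distrib)

lemma fin2_diff: "fin2 M U \<Longrightarrow> fin2 M V \<Longrightarrow> fin2 M (\<lambda>\<omega>. U \<omega> - V \<omega>)"
  using fin2_add[of M U "\<lambda>\<omega>. (-1) *\<^sub>R V \<omega>"] fin2_scaleR[of M V "-1"] by simp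

lemma fin2_zero: "fin2 M (\<lambda>\<omega>. 0)"
  by (simp add: fin2_def M2_def)

lemma fin2_sum: "finite S \<Longrightarrow> (\<And>m. m \<in> S \<Longrightarrow> fin2 M (V m)) \<Longrightarrow> fin2 M (\<lambda>\<omega>. \<Sum>m\<in>S. V m \<omega>)"
  by (induction S rule: finite_induct) (auto simp: fin2_zero intro!: fin2_add)

lemma fin2_const: "prob_space M \<Longrightarrow> fin2 M (\<lambda>\<omega>. c)"
  by (simp add: fin2_def M2_def prob_space.emeasure_space_1 ennreal_mult_less_top)

lemma fin2_lin:
  fixes f :: "'v::euclidean_space \<Rightarrow> 'w::euclidean_space"
  assumes "linear f" "fin2 M V"
  shows "fin2 M (\<lambda>\<omega>. f (V \<omega>))"
proof -
  have bl: "bounded_linear f" using assms(1) by (simp add: linear_conv_bounded_linear)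
  then obtain K where K: "K > 0" "\<And>x. norm (f x) \<le> norm x * K" using bounded_linear.pos_bounded by blast
  have cf: "continuous_on UNIV f" by (rule linear_continuous_on[OF bl])
  show ?thesis
  proof (rule fin2_mono[OF assms(2), where c = "K\<^sup>2"])
    show "(\<lambda>\<omega>. f (V \<omega>)) \<in> borel_measurable M"
      using assms(2) by (intro borel_measurable_continuous_on[OF cf]) (simp add: fin2_def)
    fix \<omega>
    have "(norm (f (V \<omega>)))\<^sup>2 \<le> (norm (V \<omega>) * K)\<^sup>2" by (intro power_mono K) simp
    then show "(norm (f (V \<omega>)))\<^sup>2 \<le> K\<^sup>2 * (norm (V \<omega>))\<^sup>2" by (simp add: power_mult_distrib mult.commute)
  qed simp
qed

lemma xtilde_linear: "linear (xtilde :: real^'p::finite^'n::finite \<Rightarrow> _)"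
  by (rule linearI) (simp_all add: xtilde_def xbar_add xbar_scaleR vec_eq_iff algebra_simps)


context flex begin

lemma G_measM: "j < \<beta> \<Longrightarrow> G (\<beta> * k + j) \<in> borel_measurable M"
proof -
  assume j: "j < \<beta>"
  have "x (\<beta> * k) \<in> borel_measurable (NN (\<beta> * k + \<beta>))"
    by (rule NN_mono[OF conjunct1[OF xy_meas]]) simp
  then have "G (\<beta> * k + j) \<in> borel_measurable (NN (\<beta> * k + \<beta>))"
    by (rule G_meas_NN) (use j in simp_all)
  then show ?thesis by (rule NN_M)
qed

lemma y_measM: "y (\<beta> * k) \<in> borel_measurable M"
  using xy_meas NN_M by blast

lemma g_sq_bound: "(\<integral>\<^sup>+s. ennreal ((norm (g i v s))\<^sup>2) \<partial>D i) \<le> ennreal (2 * \<sigma>\<^sup>2 + 4 * (norm (gfi i 0))\<^sup>2 + 4 * L\<^sup>2 * (norm v)\<^sup>2)"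
proof -
  interpret Di: prob_space "D i" by (rule D_prob)
  have gm: "g i v \<in> borel_measurable (D i)" by (rule g_meas1)
  have m: "(\<lambda>s. ennreal ((norm (g i v s - gfi i v))\<^sup>2)) \<in> borel_measurable (D i)" using gm by measurable
  have gv: "(norm (gfi i v))\<^sup>2 \<le> 2 * (norm (gfi i 0))\<^sup>2 + 2 * L\<^sup>2 * (norm v)\<^sup>2"
  proof -
    have "(norm (gfi i v))\<^sup>2 = (norm ((gfi i v - gfi i 0) + gfi i 0))\<^sup>2" by simp
    also have "\<dots> \<le> 2 * (norm (gfi i v - gfi i 0))\<^sup>2 + 2 * (norm (gfi i 0))\<^sup>2" by (rule sq_add_le)
    also have "(norm (gfi i v - gfi i 0))\<^sup>2 \<le> (L * norm v)\<^sup>2"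
      using f_lip[of i v 0] by (intro power_mono) auto
    finally show ?thesis by (simp add: power_mult_distrib)
  qed
  have "(\<integral>\<^sup>+s. ennreal ((norm (g i v s))\<^sup>2) \<partial>D i)
      \<le> (\<integral>\<^sup>+s. 2 * ennreal ((norm (g i v s - gfi i v))\<^sup>2) + ennreal (2 * (norm (gfi i v))\<^sup>2) \<partial>D i)"
  proof (rule nn_integral_mono)
    fix s
    have "(norm (g i v s))\<^sup>2 = (norm ((g i v s - gfi i v) + gfi i v))\<^sup>2" by simp
    also have "\<dots> \<le> 2 * (norm (g i v s - gfi i v))\<^sup>2 + 2 * (norm (gfi i v))\<^sup>2" by (rule sq_add_le)
    finally have "ennreal ((norm (g i v s))\<^sup>2) \<le> ennreal (2 * (norm (g i v s - gfi i v))\<^sup>2 + 2 * (norm (gfi i v))\<^sup>2)"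
      by (rule ennreal_leI)
    also have "\<dots> = 2 * ennreal ((norm (g i v s - gfi i v))\<^sup>2) + ennreal (2 * (norm (gfi i v))\<^sup>2)"
      by (simp add: ennreal_plus ennreal_mult)
    finally show "ennreal ((norm (g i v s))\<^sup>2) \<le> 2 * ennreal ((norm (g i v s - gfi i v))\<^sup>2) + ennreal (2 * (norm (gfi i v))\<^sup>2)" .
  qed
  also have "\<dots> = 2 * (\<integral>\<^sup>+s. ennreal ((norm (g i v s - gfi i v))\<^sup>2) \<partial>D i) + ennreal (2 * (norm (gfi i v))\<^sup>2)"
    using m by (simp add: nn_integral_add nn_integral_cmult Di.emeasure_space_1)
  also have "\<dots> \<le> 2 * ennreal (\<sigma>\<^sup>2) + ennreal (2 * (norm (gfi i v))\<^sup>2)"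
    by (intro add_right_mono mult_left_mono g_var) simp
  also have "\<dots> = ennreal (2 * \<sigma>\<^sup>2 + 2 * (norm (gfi i v))\<^sup>2)"
    by (simp add: ennreal_plus ennreal_mult)
  also have "\<dots> \<le> ennreal (2 * \<sigma>\<^sup>2 + 4 * (norm (gfi i 0))\<^sup>2 + 4 * L\<^sup>2 * (norm v)\<^sup>2)"
    using gv by (intro ennreal_leI) linarith
  finally show ?thesis .
qed

definition "Kc = (\<Sum>i\<in>(UNIV::'n set). 2 * \<sigma>\<^sup>2 + 4 * (norm (gfi i 0))\<^sup>2)"

lemma G_inner:
  fixes X :: "real^'p^'n"
  assumes j: "j < \<beta>"
  shows "(\<integral>\<^sup>+\<omega>'. ennreal ((norm (\<chi> i. g i (X $ i) (RR k \<omega>' (\<beta> * k + j, i))))\<^sup>2) \<partial>M) \<le> ennreal (Kc + 4 * L\<^sup>2 * (norm X)\<^sup>2)"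
proof -
  define t where "t = \<beta> * k + j"
  have "(\<integral>\<^sup>+\<omega>'. ennreal ((norm (\<chi> i. g i (X $ i) (RR k \<omega>' (\<beta> * k + j, i))))\<^sup>2) \<partial>M)
      = (\<integral>\<^sup>+\<omega>'. (\<Sum>i\<in>UNIV. ennreal ((norm (g i (X $ i) (\<xi> t i \<omega>')))\<^sup>2)) \<partial>M)"
  proof (rule nn_integral_cong)
    fix \<omega>'
    have "(norm (\<chi> i. g i (X $ i) (RR k \<omega>' (\<beta> * k + j, i))))\<^sup>2 = (\<Sum>i\<in>UNIV. (norm (g i (X $ i) (\<xi> t i \<omega>')))\<^sup>2)"
      by (subst norm_sq_vec) (simp add: RR_eval[OF j] t_def)
    then show "ennreal ((norm (\<chi> i. g i (X $ i) (RR k \<omega>' (\<beta> * k + j, i))))\<^sup>2) = (\<Sum>i\<in>UNIV. ennreal ((norm (g i (X $ i) (\<xi> t i \<omega>')))\<^sup>2))"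
      by (simp add: sum_ennreal)
  qed
  also have "\<dots> = (\<Sum>i\<in>UNIV. (\<integral>\<^sup>+\<omega>'. ennreal ((norm (g i (X $ i) (\<xi> t i \<omega>')))\<^sup>2) \<partial>M))"
  proof (rule nn_integral_sum)
    fix i
    have "(\<lambda>\<omega>'. g i (X $ i) (\<xi> t i \<omega>')) \<in> borel_measurable M"
      by (rule measurable_compose[OF \<xi>_meas g_meas1])
    then show "(\<lambda>\<omega>'. ennreal ((norm (g i (X $ i) (\<xi> t i \<omega>')))\<^sup>2)) \<in> borel_measurable M" by measurable
  qed
  also have "\<dots> = (\<Sum>i\<in>UNIV. (\<integral>\<^sup>+s. ennreal ((norm (g i (X $ i) s))\<^sup>2) \<partial>D i))"
  proof (rule sum.cong)
    fix i
    have "(\<lambda>s. ennreal ((norm (g i (X $ i) s))\<^sup>2)) \<in> borel_measurable (D i)"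
      using g_meas1[of i "X $ i"] by measurable
    then have "(\<integral>\<^sup>+s. ennreal ((norm (g i (X $ i) s))\<^sup>2) \<partial>distr M (D i) (\<xi> t i)) = (\<integral>\<^sup>+\<omega>'. ennreal ((norm (g i (X $ i) (\<xi> t i \<omega>')))\<^sup>2) \<partial>M)"
      by (intro nn_integral_distr \<xi>_meas) (simp add: \<xi>_distr)
    then show "(\<integral>\<^sup>+\<omega>'. ennreal ((norm (g i (X $ i) (\<xi> t i \<omega>')))\<^sup>2) \<partial>M) = (\<integral>\<^sup>+s. ennreal ((norm (g i (X $ i) s))\<^sup>2) \<partial>D i)"
      by (simp add: \<xi>_distr)
  qed simp
  also have "\<dots> \<le> (\<Sum>i\<in>UNIV. ennreal (2 * \<sigma>\<^sup>2 + 4 * (norm (gfi i 0))\<^sup>2 + 4 * L\<^sup>2 * (norm (X $ i))\<^sup>2))"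
    by (intro sum_mono g_sq_bound)
  also have "\<dots> = ennreal (\<Sum>i\<in>UNIV. 2 * \<sigma>\<^sup>2 + 4 * (norm (gfi i 0))\<^sup>2 + 4 * L\<^sup>2 * (norm (X $ i))\<^sup>2)"
    by (rule sum_ennreal) simp
  also have "(\<Sum>i\<in>UNIV. 2 * \<sigma>\<^sup>2 + 4 * (norm (gfi i 0))\<^sup>2 + 4 * L\<^sup>2 * (norm (X $ i))\<^sup>2) = Kc + 4 * L\<^sup>2 * (norm X)\<^sup>2"
    by (simp add: Kc_def sum.distrib norm_sq_vec sum_distrib_left)
  finally show ?thesis .
qed

end


context flex begin

lemma G_fin2:
  assumes xf: "fin2 M (x (\<beta> * k))" and j: "j < \<beta>"
  shows "fin2 M (G (\<beta> * k + j))"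
proof -
  interpret prob_space M by (rule M)
  define F where "F = (\<lambda>(X::real^'p^'n, r::nat \<times> 'n \<Rightarrow> 's). ennreal ((norm (\<chi> i. g i (X $ i) (r (\<beta> * k + j, i))))\<^sup>2))"
  have Fm: "F \<in> borel_measurable (borel \<Otimes>\<^sub>M PiM (Blk k) MD)"
  proof -
    have mem: "(\<beta> * k + j, i) \<in> Blk k" for i using j by (auto simp: Blk_def)
    have "(\<lambda>p. \<chi> i. g i ((fst p :: real^'p^'n) $ i) (snd p (\<beta> * k + j, i))) \<in> borel_measurable (borel \<Otimes>\<^sub>M PiM (Blk k) MD)"
    proof (rule measurable_vec_lambda)
      fix i
      have "(\<lambda>p. snd p (\<beta> * k + j, i)) \<in> measurable (borel \<Otimes>\<^sub>M PiM (Blk k) MD) (MD (\<beta> * k + j, i))"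
        by (rule measurable_compose[OF measurable_snd measurable_component_singleton[OF mem]])
      then have m2: "(\<lambda>p. snd p (\<beta> * k + j, i)) \<in> measurable (borel \<Otimes>\<^sub>M PiM (Blk k) MD) (D i)"
        by (simp add: MD_def)
      have m1: "(\<lambda>p. (fst p :: real^'p^'n) $ i) \<in> borel_measurable (borel \<Otimes>\<^sub>M PiM (Blk k) MD)"
        by measurable
      show "(\<lambda>p. g i ((fst p :: real^'p^'n) $ i) (snd p (\<beta> * k + j, i))) \<in> borel_measurable (borel \<Otimes>\<^sub>M PiM (Blk k) MD)"
        by (rule g_comp_meas[OF m1 m2])
    qed
    then have "(\<lambda>p. ennreal ((norm (\<chi> i. g i ((fst p :: real^'p^'n) $ i) (snd p (\<beta> * k + j, i))))\<^sup>2)) \<in> borel_measurable (borel \<Otimes>\<^sub>M PiM (Blk k) MD)"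
      by measurable
    moreover have "F = (\<lambda>p. ennreal ((norm (\<chi> i. g i ((fst p :: real^'p^'n) $ i) (snd p (\<beta> * k + j, i))))\<^sup>2))"
      by (auto simp: F_def)
    ultimately show ?thesis by simp
  qed
  have xm: "x (\<beta> * k) \<in> borel_measurable M" by (rule x_meas)
  have xsq: "(\<lambda>\<omega>. ennreal ((norm (x (\<beta> * k) \<omega>))\<^sup>2)) \<in> borel_measurable M" using xm by measurable
  have Kc: "Kc \<ge> 0" by (simp add: Kc_def sum_nonneg)
  have "M2 M (G (\<beta> * k + j)) = (\<integral>\<^sup>+\<omega>. F (x (\<beta> * k) \<omega>, RR k \<omega>) \<partial>M)"
    unfolding M2_def by (intro nn_integral_cong) (simp add: F_def G_round[OF j] RR_eval[OF j])
  also have "\<dots> = (\<integral>\<^sup>+\<omega>. (\<integral>\<^sup>+\<omega>'. F (x (\<beta> * k) \<omega>, RR k \<omega>') \<partial>M) \<partial>M)"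
    by (rule round_tonelli[OF Fm])
  also have "\<dots> \<le> (\<integral>\<^sup>+\<omega>. ennreal Kc + ennreal (4 * L\<^sup>2) * ennreal ((norm (x (\<beta> * k) \<omega>))\<^sup>2) \<partial>M)"
  proof (rule nn_integral_mono)
    fix \<omega>
    have "(\<integral>\<^sup>+\<omega>'. F (x (\<beta> * k) \<omega>, RR k \<omega>') \<partial>M) \<le> ennreal (Kc + 4 * L\<^sup>2 * (norm (x (\<beta> * k) \<omega>))\<^sup>2)"
      unfolding F_def using G_inner[OF j, of "x (\<beta> * k) \<omega>" k] by simp
    also have "\<dots> = ennreal Kc + ennreal (4 * L\<^sup>2) * ennreal ((norm (x (\<beta> * k) \<omega>))\<^sup>2)"
      using Kc by (simp add: ennreal_plus ennreal_mult)
    finally show "(\<integral>\<^sup>+\<omega>'. F (x (\<beta> * k) \<omega>, RR k \<omega>') \<partial>M) \<le> ennreal Kc + ennreal (4 * L\<^sup>2) * ennreal ((norm (x (\<beta> * k) \<omega>))\<^sup>2)" .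
  qed
  also have "\<dots> = ennreal Kc + ennreal (4 * L\<^sup>2) * M2 M (x (\<beta> * k))"
    unfolding M2_def using xsq by (simp add: nn_integral_add nn_integral_cmult emeasure_space_1)
  also have "\<dots> < \<infinity>" using xf by (simp add: fin2_def ennreal_mult_less_top)
  finally show ?thesis using G_measM[OF j] by (simp add: fin2_def)
qed

lemma moments: "fin2 M (x (\<beta> * k)) \<and> fin2 M (y (\<beta> * k))"
proof (induction k)
  case 0
  have xc: "x 0 = (\<lambda>\<omega>. x0)" using x_init by auto
  have x0f: "fin2 M (x (\<beta> * 0))" using xc fin2_const[OF M] by simp
  have "fin2 M (G (\<beta> * 0 + 0))" by (rule G_fin2[OF x0f]) (use \<beta> in simp)
  moreover have "y 0 = G 0" using y_init by auto
  ultimately show ?case using x0f by simp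
next
  case (Suc k)
  have xf: "fin2 M (x (\<beta> * k))" and yf: "fin2 M (y (\<beta> * k))" using Suc.IH by auto
  have Gf: "fin2 M (G (\<beta> * k + j))" if "j < \<beta>" for j by (rule G_fin2[OF xf that])
  have G0: "fin2 M (G (\<beta> * k))" using Gf[of 0] \<beta> by simp
  have "fin2 M (\<lambda>\<omega>. Wbar ** (x (\<beta> * k) \<omega> - \<gamma> *\<^sub>R (\<Sum>j<\<beta>. y (\<beta> * k) \<omega> + G (\<beta> * k + j) \<omega> - G (\<beta> * k) \<omega>)))"
    by (intro fin2_lin[OF matmul_linear] fin2_diff xf fin2_scaleR fin2_sum fin2_add yf Gf G0) auto
  moreover have "x (\<beta> * Suc k) = (\<lambda>\<omega>. Wbar ** (x (\<beta> * k) \<omega> - \<gamma> *\<^sub>R (\<Sum>j<\<beta>. y (\<beta> * k) \<omega> + G (\<beta> * k + j) \<omega> - G (\<beta> * k) \<omega>)))"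
    using x_step by auto
  ultimately have xf1: "fin2 M (x (\<beta> * Suc k))" by simp
  have "fin2 M (G (\<beta> * Suc k + 0))" by (rule G_fin2[OF xf1]) (use \<beta> in simp)
  then have G1: "fin2 M (G (\<beta> * (k + 1)))" by simp
  have "fin2 M (\<lambda>\<omega>. Wbar ** (y (\<beta> * k) \<omega> + G (\<beta> * (k + 1)) \<omega> - G (\<beta> * k) \<omega>))"
    by (intro fin2_lin[OF matmul_linear] fin2_diff fin2_add yf G1 G0)
  moreover have "y (\<beta> * Suc k) = (\<lambda>\<omega>. Wbar ** (y (\<beta> * k) \<omega> + G (\<beta> * (k + 1)) \<omega> - G (\<beta> * k) \<omega>))"
    using y_round by auto
  ultimately have yf1: "fin2 M (y (\<beta> * Suc k))" by simp
  show ?case using xf1 yf1 by simp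
qed

lemma Cc_fin: "Cc k < \<infinity>"
proof -
  have f: "fin2 M (\<lambda>\<omega>. xtilde (x (\<beta> * k) \<omega>))" by (rule fin2_lin[OF xtilde_linear conjunct1[OF moments]])
  have m: "(\<lambda>\<omega>. ennreal ((norm (xtilde (x (\<beta> * k) \<omega>)))\<^sup>2)) \<in> borel_measurable M"
  proof -
    have "(\<lambda>\<omega>. xtilde (x (\<beta> * k) \<omega>)) \<in> borel_measurable M" using f by (simp add: fin2_def)
    then show ?thesis by measurable
  qed
  have "Cc k = ennreal (\<gamma> * \<beta> * L\<^sup>2 / (2 * real CARD('n))) * M2 M (\<lambda>\<omega>. xtilde (x (\<beta> * k) \<omega>))"
    unfolding Cc_def M2_def using \<gamma>_pos
    by (subst nn_integral_cmult[OF m, symmetric]) (rule nn_integral_cong, rule ennreal_mult, auto)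
  also have "\<dots> < \<infinity>" using f by (simp add: fin2_def ennreal_mult_less_top)
  finally show ?thesis .
qed

end


context flex begin

lemma main:
  assumes K: "K \<ge> 1"
  shows "(1 / real K) * (\<Sum>k<K. prob_space.expectation M
             (\<lambda>\<omega>. (norm (gavg gfi (xbar (x (\<beta> * k) \<omega>))))\<^sup>2))
         \<le> 4 * (prob_space.expectation M (\<lambda>\<omega>. favg fi (xbar (x 0 \<omega>))) - fstar fi)
               / (\<gamma> * real \<beta> * real K)
           + 4 * L\<^sup>2 / real CARD('n) * ((1 / real K) * (\<Sum>k<K. prob_space.expectation M
               (\<lambda>\<omega>. (norm (xtilde (x (\<beta> * k) \<omega>)))\<^sup>2)))
           + 2 * \<gamma> * L / real CARD('n) * \<sigma>\<^sup>2"
proof -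
  interpret prob_space M by (rule M)
  define n where "n = real CARD('n)"
  have n: "n > 0" by (simp add: n_def)
  define ea where "ea k = expectation (\<lambda>\<omega>. (norm (gavg gfi (xbar (x (\<beta> * k) \<omega>))))\<^sup>2)" for k
  define ex where "ex k = expectation (\<lambda>\<omega>. (norm (xtilde (x (\<beta> * k) \<omega>)))\<^sup>2)" for k
  define E2a where "E2a k = (\<integral>\<^sup>+\<omega>. ennreal ((norm (gavg gfi (xbar (x (\<beta> * k) \<omega>))))\<^sup>2) \<partial>M)" for k
  define E2x where "E2x k = (\<integral>\<^sup>+\<omega>. ennreal ((norm (xtilde (x (\<beta> * k) \<omega>)))\<^sup>2) \<partial>M)" for k
  define Phi0 where "Phi0 = Phi (xbar x0)"
  define ca where "ca = \<gamma> * real \<beta> / 2"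
  define cx where "cx = \<gamma> * real \<beta> * L\<^sup>2 / (2 * n)"
  have ca: "ca > 0" using \<gamma>_pos \<beta> by (simp add: ca_def)
  have cx: "cx \<ge> 0" using \<gamma>_pos n by (simp add: cx_def)
  have c0: "c0 \<ge> 0" using \<gamma>_pos L_pos by (simp add: c0_def)
  have Phi0: "Phi0 \<ge> 0" by (simp add: Phi0_def Phi_nonneg)
  have am: "(\<lambda>\<omega>. (norm (gavg gfi (xbar (x (\<beta> * k) \<omega>))))\<^sup>2) \<in> borel_measurable M" for k
    using gavg_meas[OF xbar_meas[OF x_meas]] by measurable
  have xtm: "(\<lambda>\<omega>. (norm (xtilde (x (\<beta> * k) \<omega>)))\<^sup>2) \<in> borel_measurable M" for k
    using xtilde_meas[OF x_meas] by measurable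
  have ea_eq: "ea k = enn2real (E2a k)" for k
    unfolding ea_def E2a_def by (rule integral_eq_nn_integral[OF am]) simp
  have ex_eq: "ex k = enn2real (E2x k)" for k
    unfolding ex_def E2x_def by (rule integral_eq_nn_integral[OF xtm]) simp
  have E2x_fin: "E2x k < \<infinity>" for k
  proof -
    have "fin2 M (\<lambda>\<omega>. xtilde (x (\<beta> * k) \<omega>))" by (rule fin2_lin[OF xtilde_linear conjunct1[OF moments]])
    then show ?thesis by (simp add: fin2_def M2_def E2x_def)
  qed
  have E2x_eq: "E2x k = ennreal (ex k)" for k
    using E2x_fin[of k] by (simp add: ex_eq ennreal_enn2real_if)
  have Bb_eq: "Bb k = ennreal ca * E2a k" for k
    unfolding Bb_def E2a_def ca_def
    by (subst nn_integral_cmult[symmetric]) (use am in measurable, rule nn_integral_cong, rule ennreal_mult, use \<gamma>_pos in auto)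
  have Cc_eq: "Cc k = ennreal cx * E2x k" for k
    unfolding Cc_def E2x_def cx_def n_def
    by (subst nn_integral_cmult[symmetric]) (use xtm in measurable, rule nn_integral_cong, rule ennreal_mult, use \<gamma>_pos in auto)
  have Aa0: "Aa 0 = ennreal Phi0" by (simp add: Aa_def x_init Phi0_def emeasure_space_1)
  define Q where "Q = Phi0 + cx * (\<Sum>k<K. ex k) + real K * c0"
  have Q: "Q \<ge> 0" using Phi0 cx c0 by (simp add: Q_def ex_def sum_nonneg)
  have "(\<Sum>k<K. Bb k) \<le> Aa K + (\<Sum>k<K. Bb k)" by simp
  also have "\<dots> \<le> Aa 0 + (\<Sum>k<K. Cc k) + ennreal (real K * c0)" by (rule sum_steps)
  also have "\<dots> = ennreal Q"
  proof -
    have "(\<Sum>k<K. Cc k) = ennreal (cx * (\<Sum>k<K. ex k))"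
      using cx by (simp add: Cc_eq E2x_eq ennreal_mult[symmetric] sum_ennreal ex_def sum_distrib_left del: ennreal_mult)
    then show ?thesis using Phi0 cx c0 by (simp add: Aa0 Q_def ennreal_plus ex_def sum_nonneg)
  qed
  finally have sumB: "(\<Sum>k<K. ennreal ca * E2a k) \<le> ennreal Q" by (simp add: Bb_eq)
  have E2a_fin: "E2a k < \<infinity>" if "k < K" for k
  proof -
    have "ennreal ca * E2a k \<le> (\<Sum>k<K. ennreal ca * E2a k)"
      using that by (intro member_le_sum) auto
    also have "\<dots> < \<infinity>" using sumB by (simp add: le_less_trans)
    finally show ?thesis using ca by (auto simp: ennreal_mult_less_top)
  qed
  have "(\<Sum>k<K. ennreal ca * E2a k) = ennreal (ca * (\<Sum>k<K. ea k))"
  proof -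
    have "(\<Sum>k<K. ennreal ca * E2a k) = (\<Sum>k<K. ennreal (ca * ea k))"
    proof (rule sum.cong)
      fix k assume "k \<in> {..<K}"
      then have "E2a k = ennreal (ea k)" using E2a_fin[of k] by (simp add: ea_eq ennreal_enn2real_if)
      then show "ennreal ca * E2a k = ennreal (ca * ea k)" using ca by (simp add: ennreal_mult ea_def)
    qed simp
    also have "\<dots> = ennreal (\<Sum>k<K. ca * ea k)" using ca by (intro sum_ennreal) (simp add: ea_def)
    finally show ?thesis by (simp add: sum_distrib_left)
  qed
  with sumB have "ennreal (ca * (\<Sum>k<K. ea k)) \<le> ennreal Q" by simp
  then have main_ineq: "ca * (\<Sum>k<K. ea k) \<le> Q" using Q by (simp add: ennreal_le_iff)
  have Kp: "real K > 0" using K by simp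
  define Sa where "Sa = (\<Sum>k<K. ea k)"
  define Sx where "Sx = (\<Sum>k<K. ex k)"
  have Sx: "Sx \<ge> 0" by (simp add: Sx_def ex_def sum_nonneg)
  have E0: "expectation (\<lambda>\<omega>. favg fi (xbar (x 0 \<omega>))) - fstar fi = Phi0"
    by (simp add: x_init Phi0_def Phi_def prob_space)
  have "(1 / real K) * Sa \<le> 2 * Phi0 / (\<gamma> * real \<beta> * real K) + L\<^sup>2 / n * ((1 / real K) * Sx) + \<gamma> * L / n * \<sigma>\<^sup>2"
  proof -
    have "\<gamma> * real \<beta> / 2 * Sa \<le> Phi0 + \<gamma> * real \<beta> * L\<^sup>2 / (2 * n) * Sx + real K * (L * \<gamma>\<^sup>2 * real \<beta> * \<sigma>\<^sup>2 / (2 * n))"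
      using main_ineq by (simp add: ca_def Q_def cx_def c0_def n_def Sa_def Sx_def)
    then have "Sa \<le> (2 / (\<gamma> * real \<beta>)) * (Phi0 + \<gamma> * real \<beta> * L\<^sup>2 / (2 * n) * Sx + real K * (L * \<gamma>\<^sup>2 * real \<beta> * \<sigma>\<^sup>2 / (2 * n)))"
      using \<gamma>_pos \<beta> by (simp add: field_simps)
    also have "\<dots> = 2 * Phi0 / (\<gamma> * real \<beta>) + L\<^sup>2 / n * Sx + real K * (\<gamma> * L / n * \<sigma>\<^sup>2)"
      using \<gamma>_pos \<beta> n by (simp add: field_simps power2_eq_square)
    finally have "Sa \<le> 2 * Phi0 / (\<gamma> * real \<beta>) + L\<^sup>2 / n * Sx + real K * (\<gamma> * L / n * \<sigma>\<^sup>2)" .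
    then have "(1 / real K) * Sa \<le> (1 / real K) * (2 * Phi0 / (\<gamma> * real \<beta>) + L\<^sup>2 / n * Sx + real K * (\<gamma> * L / n * \<sigma>\<^sup>2))"
      using Kp by (intro mult_left_mono) auto
    also have "\<dots> = 2 * Phi0 / (\<gamma> * real \<beta> * real K) + L\<^sup>2 / n * ((1 / real K) * Sx) + \<gamma> * L / n * \<sigma>\<^sup>2"
      using Kp by (simp add: field_simps)
    finally show ?thesis .
  qed
  also have "\<dots> \<le> 4 * Phi0 / (\<gamma> * real \<beta> * real K) + 4 * L\<^sup>2 / n * ((1 / real K) * Sx) + 2 * \<gamma> * L / n * \<sigma>\<^sup>2"
  proof -
    have a: "2 * Phi0 / (\<gamma> * real \<beta> * real K) \<le> 4 * Phi0 / (\<gamma> * real \<beta> * real K)"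
      using Phi0 \<gamma>_pos \<beta> Kp by (intro divide_right_mono) auto
    have b: "L\<^sup>2 / n * ((1 / real K) * Sx) \<le> 4 * L\<^sup>2 / n * ((1 / real K) * Sx)"
      using n Kp Sx by (intro mult_right_mono divide_right_mono) auto
    have c: "\<gamma> * L / n * \<sigma>\<^sup>2 \<le> 2 * \<gamma> * L / n * \<sigma>\<^sup>2"
      using n \<gamma>_pos L_pos by (intro mult_right_mono divide_right_mono) auto
    show ?thesis using a b c by linarith
  qed
  finally show ?thesis unfolding E0[symmetric] Sa_def Sx_def ea_def ex_def n_def .
qed

end

theorem lemma3:
  fixes M :: "'a measure"
    and D :: "'n::finite \<Rightarrow> 's measure"
    and \<xi> :: "nat \<Rightarrow> 'n \<Rightarrow> 'a \<Rightarrow> 's"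
    and fi :: "'n \<Rightarrow> real^'p::finite \<Rightarrow> real"
    and gfi :: "'n \<Rightarrow> real^'p \<Rightarrow> real^'p"
    and g :: "'n \<Rightarrow> real^'p \<Rightarrow> 's \<Rightarrow> real^'p"
    and W Wbar :: "real^'n^'n"
    and x y :: "nat \<Rightarrow> 'a \<Rightarrow> real^'p^'n"
    and x0 :: "real^'p^'n"
    and L \<sigma> \<gamma> :: real
    and \<alpha> \<beta> K :: nat
  assumes M: "prob_space M"
    \<comment> \<open>samples: xi_{t,i} ~ D_i, independent across nodes and iterations\<close>
    and \<xi>_meas: "\<And>t i. \<xi> t i \<in> measurable M (D i)"
    and \<xi>_distr: "\<And>t i. distr M (D i) (\<xi> t i) = D i"
    and \<xi>_indep: "prob_space.indep_vars M (\<lambda>(t,i). D i) (\<lambda>(t,i). \<xi> t i) UNIV"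
    \<comment> \<open>stochastic gradient oracle: measurable, unbiased, bounded variance (V)\<close>
    and g_meas: "\<And>i. (\<lambda>(v,s). g i v s) \<in> borel_measurable (borel \<Otimes>\<^sub>M D i)"
    and g_unbiased: "\<And>i v. integrable (D i) (g i v) \<and> (\<integral>s. g i v s \<partial>D i) = gfi i v"
    and g_var: "\<And>i v. (\<integral>\<^sup>+ s. ennreal ((norm (g i v s - gfi i v))\<^sup>2) \<partial>D i) \<le> ennreal (\<sigma>\<^sup>2)"
    \<comment> \<open>(S): gfi i is the gradient of fi i and is L-Lipschitz; f^* finite\<close>
    and f_grad: "\<And>i v. (fi i has_derivative (\<lambda>h. gfi i v \<bullet> h)) (at v)"
    and f_lip: "\<And>i u v. norm (gfi i u - gfi i v) \<le> L * norm (u - v)"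
    and f_bdd: "bdd_below (range (favg fi))"
    \<comment> \<open>(G): mixing matrix\<close>
    and W_ds: "doubly_stochastic W"
    and W_rho: "rhoW W < 1"
    \<comment> \<open>algorithm parameters: FlexGT or Acc-FlexGT\<close>
    and \<alpha>: "\<alpha> \<ge> 1" and \<beta>: "\<beta> \<ge> 1" and \<gamma>_pos: "\<gamma> > 0"
    and Wbar: "Wbar = matpow W \<alpha> \<or> Wbar = accM W \<alpha>"
    \<comment> \<open>the recursion\<close>
    and x_init: "\<And>\<omega>. x 0 \<omega> = x0"
    and y_init: "\<And>\<omega>. y 0 \<omega> = stoch_grad g \<xi> x \<beta> 0 \<omega>"
    and x_inner: "\<And>k j \<omega>. j + 2 \<le> \<beta> \<Longrightarrow>
         x (\<beta> * k + j + 1) \<omega> = x (\<beta> * k + j) \<omega> - \<gamma> *\<^sub>R y (\<beta> * k + j) \<omega>"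
    and y_inner: "\<And>k j \<omega>. j + 2 \<le> \<beta> \<Longrightarrow>
         y (\<beta> * k + j + 1) \<omega> = y (\<beta> * k + j) \<omega>
            + stoch_grad g \<xi> x \<beta> (\<beta> * k + j + 1) \<omega> - stoch_grad g \<xi> x \<beta> (\<beta> * k + j) \<omega>"
    and x_round: "\<And>k \<omega>. x (\<beta> * (k + 1)) \<omega> =
         Wbar ** (x (\<beta> * k) \<omega> - \<gamma> *\<^sub>R (\<Sum>j<\<beta>. y (\<beta> * k + j) \<omega>))"
    and y_round: "\<And>k \<omega>. y (\<beta> * (k + 1)) \<omega> =
         Wbar ** (y (\<beta> * k) \<omega> + stoch_grad g \<xi> x \<beta> (\<beta> * (k + 1)) \<omega>
                   - stoch_grad g \<xi> x \<beta> (\<beta> * k) \<omega>)"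
    \<comment> \<open>stepsize condition\<close>
    and \<gamma>_le: "\<gamma> \<le> 1 / (4 * L * real \<beta>)"
    and K: "K \<ge> 1"
  shows "(1 / real K) * (\<Sum>k<K. prob_space.expectation M
             (\<lambda>\<omega>. (norm (gavg gfi (xbar (x (\<beta> * k) \<omega>))))\<^sup>2))
         \<le> 4 * (prob_space.expectation M (\<lambda>\<omega>. favg fi (xbar (x 0 \<omega>))) - fstar fi)
               / (\<gamma> * real \<beta> * real K)
           + 4 * L\<^sup>2 / real CARD('n) * ((1 / real K) * (\<Sum>k<K. prob_space.expectation M
               (\<lambda>\<omega>. (norm (xtilde (x (\<beta> * k) \<omega>)))\<^sup>2)))
           + 2 * \<gamma> * L / real CARD('n) * \<sigma>\<^sup>2"
proof -
  have F: "flex M D \<xi> fi gfi g W Wbar x y x0 L \<sigma> \<gamma> \<alpha> \<beta>"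
    by (rule flex.intro[OF assms(1-23)])
  show ?thesis by (rule flex.main[OF F K])
qed

end
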